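(* Let $\lambda\ge L_\varphi^2$ and for $t\ge1$ let $\widehat\varphi_{t,s'}=\varphi_{t,s'}-\sum_{s''\in\mathcal S_t}p_{t,s''}(\widehat\theta_{t+1})\varphi_{t,s''}$. Then (1) $\sum_{t=1}^T\max_{s'\in\mathcal S_t}\|\varphi_{t,s'}\|^2_{\Sigma_t^{-1}}\le\frac{2d}{\kappa}\log\big(1+\frac{T\mathcal UL_\varphi^2}{\lambda d}\big)$; (2) $\sum_{t=1}^T\sum_{s'\in\mathcal S_t}p_{t,s'}(\widehat\theta_{t+1})\|\widehat\varphi_{t,s'}\|^2_{\Sigma_t^{-1}}\le2d\log\big(1+\frac{T\mathcal UL_\varphi^2}{\lambda d}\big)$; (3) $\sum_{t=1}^T\max_{s'\in\mathcal S_t}\|\widehat\varphi_{t,s'}\|^2_{\Sigma_t^{-1}}\le\frac{8d}{\kappa}\log\big(1+\frac{T\mathcal UL_\varphi^2}{\lambda d}\big)$.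
   Context: MNL model: finite $\mathcal S,\mathcal A$, reachable sets $\mathcal S_{s,a}$, $\mathcal U=\max|\mathcal S_{s,a}|$, features $\varphi(s,a,s')\in\mathbb R^d$, $p(s'\mid s,a,\theta)=\exp(\varphi(s,a,s')^\top\theta)/\sum_{s''\in\mathcal S_{s,a}}\exp(\varphi(s,a,s'')^\top\theta)$, true $\theta^*$. Along a trajectory $(s_t,a_t)$: $\mathcal S_t=\mathcal S_{s_t,a_t}$, $\varphi_{t,s'}=\varphi(s_t,a_t,s')$, $p_{t,s'}(\theta)=p(s'\mid s_t,a_t,\theta)$. Assumptions: (A1) $\|\varphi\|_2\le L_\varphi$, $\|\theta^*\|_2\le L_\theta$, $\Theta=\{\|\theta\|_2\le L_\theta\}$; (A2) $\inf_{\theta\in\Theta}p_{t,s'}(\theta)p_{t,s''}(\theta)\ge\kappa\in(0,1)$ for all $t\in[T]$, $s',s''\in\mathcal S_t$; (A3) each $\mathcal S_{s,a}$ contains $s'$ with $\varphi(s,a,s')=0$. Estimator: $\ell_t(\theta)=-\sum_{s'\in\mathcal S_t}\mathbf 1\{s_{t+1}=s'\}\log p_{t,s'}(\theta)$; $\widehat\theta_1=0$, $\Sigma_t=\lambda I_d+\sum_{i<t}\nabla^2\ell_i(\widehat\theta_{i+1})$, $\widehat\Sigma_t=\Sigma_t+\eta\nabla^2\ell_t(\widehat\theta_t)$, $\widehat\theta_{t+1}=\arg\min_{\theta\in\Theta}\{\nabla\ell_t(\widehat\theta_t)^\top(\theta-\widehat\theta_t)+\frac1{2\eta}\|\theta-\widehat\theta_t\|^2_{\widehat\Sigma_t}\}$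 ($\eta>0$). *)

theory Defs
  imports "HOL-Analysis.Analysis"
begin

text \<open>MNL transition model.  Sr s a is the reachable set, phi s a s' the feature vector.\<close>

definition mnl_prob ::
  "('s \<Rightarrow> 'a \<Rightarrow> 's set) \<Rightarrow> ('s \<Rightarrow> 'a \<Rightarrow> 's \<Rightarrow> real^'d) \<Rightarrow> 's \<Rightarrow> 'a \<Rightarrow> real^'d \<Rightarrow> 's \<Rightarrow> real" where
  "mnl_prob Sr phi s a \<theta> s' =
     exp (phi s a s' \<bullet> \<theta>) / (\<Sum>s''\<in>Sr s a. exp (phi s a s'' \<bullet> \<theta>))"

definition Ucard :: "('s::finite \<Rightarrow> 'a::finite \<Rightarrow> 's set) \<Rightarrow> nat" where
  "Ucard Sr = Max {card (Sr s a) | s a. True}"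

definition mnl_loss ::
  "('s \<Rightarrow> 'a \<Rightarrow> 's set) \<Rightarrow> ('s \<Rightarrow> 'a \<Rightarrow> 's \<Rightarrow> real^'d) \<Rightarrow> (nat \<Rightarrow> 's) \<Rightarrow> (nat \<Rightarrow> 'a)
    \<Rightarrow> nat \<Rightarrow> real^'d \<Rightarrow> real" where
  "mnl_loss Sr phi st ac t \<theta> =
     - (\<Sum>s'\<in>Sr (st t) (ac t).
          (if st (Suc t) = s' then 1 else 0) * ln (mnl_prob Sr phi (st t) (ac t) \<theta> s'))"

definition grad :: "(real^'d \<Rightarrow> real) \<Rightarrow> real^'d \<Rightarrow> real^'d" where
  "grad f x = (SOME D. GDERIV f x :> D)"

definition hess :: "(real^'d \<Rightarrow> real) \<Rightarrow> real^'d \<Rightarrow> real^'d^'d" where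
  "hess f x = (SOME H. ((\<lambda>y. grad f y) has_derivative (\<lambda>h. H *v h)) (at x))"

definition wnorm2 :: "real^'d^'d \<Rightarrow> real^'d \<Rightarrow> real" where
  "wnorm2 A x = x \<bullet> (A *v x)"

text \<open>Online mirror descent estimator.  est k = (theta_hat_{k+1}, Sigma_{k+1}):
  theta_hat_1 = 0, Sigma_1 = lambda I,
  theta_hat_{t+1} = argmin over Theta of the OMD objective built from l_t ac theta_hat_t,
  Sigma_{t+1} = Sigma_t + hess l_t (theta_hat_{t+1}).\<close>
primrec mnl_est ::
  "('s \<Rightarrow> 'a \<Rightarrow> 's set) \<Rightarrow> ('s \<Rightarrow> 'a \<Rightarrow> 's \<Rightarrow> real^'d) \<Rightarrow> (nat \<Rightarrow> 's) \<Rightarrow> (nat \<Rightarrow> 'a)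
    \<Rightarrow> real \<Rightarrow> real \<Rightarrow> real \<Rightarrow> nat \<Rightarrow> (real^'d) \<times> (real^'d^'d)" where
  "mnl_est Sr phi st ac L\<theta> lam \<eta> 0 = (0, lam *\<^sub>R mat 1)"
| "mnl_est Sr phi st ac L\<theta> lam \<eta> (Suc k) =
     (let t = Suc k;
          \<theta>t = fst (mnl_est Sr phi st ac L\<theta> lam \<eta> k);
          \<Sigma>t = snd (mnl_est Sr phi st ac L\<theta> lam \<eta> k);
          lt = mnl_loss Sr phi st ac t;
          \<Sigma>hat = \<Sigma>t + \<eta> *\<^sub>R hess lt \<theta>t;
          g = grad lt \<theta>t;
          \<theta>new = arg_min_on (\<lambda>\<theta>. g \<bullet> (\<theta> - \<theta>t) + 1 / (2 * \<eta>) * wnorm2 \<Sigma>hat (\<theta> - \<theta>t))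
                    {\<theta>. norm \<theta> \<le> L\<theta>}
      in (\<theta>new, \<Sigma>t + hess lt \<theta>new))"

definition theta_hat where
  "theta_hat Sr phi st ac L\<theta> lam \<eta> t = fst (mnl_est Sr phi st ac L\<theta> lam \<eta> (t - 1))"

definition Sigma where
  "Sigma Sr phi st ac L\<theta> lam \<eta> t = snd (mnl_est Sr phi st ac L\<theta> lam \<eta> (t - 1))"

end

theory Submission
  imports Defs
begin

definition outer :: "real^'n \<Rightarrow> real^'n \<Rightarrow> real^'n^'n" where
  "outer u v = (\<chi> i j. u$i * v$j)"

lemma outer_mult_vec: "outer u v *v x = (v \<bullet> x) *\<^sub>R u"
  by (simp add: outer_def matrix_vector_mult_def vec_eq_iff inner_vec_def sum_distrib_left mult_ac)

lemma mat_mult_outer: "(A::real^'n^'n) ** outer u v = outer (A *v u) v"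
  by (simp add: outer_def matrix_matrix_mult_def matrix_vector_mult_def vec_eq_iff sum_distrib_left sum_distrib_right mult_ac)

lemma outer_mult_mat: "outer u v ** (B::real^'n^'n) = outer u (transpose B *v v)"
  by (simp add: outer_def matrix_matrix_mult_def matrix_vector_mult_def transpose_def vec_eq_iff sum_distrib_left mult_ac)

lemma matrix_add_rdistrib': "((A::real^'n^'n) + B) ** C = A ** C + B ** C"
  by (vector matrix_matrix_mult_def sum.distrib[symmetric] field_simps)

lemma outer_zero[simp]: "outer 0 v = 0"
  by (simp add: outer_def vec_eq_iff)

lemma mvec_axis: "((A::real^'n^'n) *v axis j 1) $ i = A $ i $ j"
  by (metis cart_eq_inner_axis matrix_vector_mul_component)

lemma vmat_axis: "(axis k 1 v* (A::real^'n^'n)) $ j = A $ k $ j"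
proof -
  have "(axis k 1 v* A) $ j = (\<Sum>i\<in>UNIV. (if i = k then A $ i $ j else 0))"
    unfolding vector_matrix_mult_def vec_lambda_beta by (intro sum.cong refl) (simp add: axis_def)
  then show ?thesis by simp
qed

lemma det_I_outer: "det (mat 1 + outer u v :: real^'n^'n) = 1 + u \<bullet> v"
proof (cases "u = 0")
  case True then show ?thesis by simp
next
  case False
  then obtain k where uk: "u$k \<noteq> 0" by (auto simp: vec_eq_iff)
  define C :: "real^'n^'n" where "C = (\<chi> i j. if j = k then (mat 1 *v u)$i else (mat 1::real^'n^'n)$i$j)"
  have dC: "det C = u$k" unfolding C_def using cramer_lemma[where A="mat 1::real^'n^'n" and k=k and x=u] by simp
  have Ck: "C *v axis k 1 = u"
    by (simp add: vec_eq_iff mvec_axis C_def)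
  define w where "w = transpose C *v v"
  have wk: "w$k = u \<bullet> v"
  proof -
    have "C $ i $ k = u $ i" for i by (simp add: C_def)
    then show ?thesis
      by (simp add: w_def matrix_vector_mult_def transpose_def inner_vec_def mult_ac)
  qed
  define R :: "real^'n^'n" where "R = mat 1 + outer (axis k 1) w"
  have "C ** R = C + outer u w"
    by (simp add: R_def matrix_add_ldistrib mat_mult_outer Ck)
  moreover have "(mat 1 + outer u v) ** C = C + outer u w"
    by (simp add: matrix_add_rdistrib' outer_mult_mat w_def)
  ultimately have eq: "det C * det R = det (mat 1 + outer u v) * det C"
    by (metis det_mul)
  have "transpose R = (\<chi> i j. if j = k then (axis k 1 + w)$i else (mat 1::real^'n^'n)$i$j)"
    by (auto simp: R_def transpose_def outer_def vec_eq_iff mat_def axis_def)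
  moreover have "det (\<chi> i j. if j = k then (axis k 1 + w)$i else (mat 1::real^'n^'n)$i$j) = 1 + w$k"
  proof -
    have "det (\<chi> i j. if j = k then (axis k 1 + w)$i else (mat 1::real^'n^'n)$i$j) = (axis k 1 + w)$k * det (mat 1::real^'n^'n)"
      using cramer_lemma[where A="mat 1::real^'n^'n" and k=k and x="axis k 1 + w"]
      unfolding matrix_vector_mul_lid .
    also have "\<dots> = 1 + w$k" by (simp only: det_I vector_add_component axis_nth mult_1_right)
    finally show ?thesis .
  qed
  ultimately have "det R = 1 + w$k"
    using det_transpose[of R] by simp
  with eq dC uk wk show ?thesis by simp
qed

definition pd :: "real^'n^'n \<Rightarrow> bool" where
  "pd A \<longleftrightarrow> transpose A = A \<and> (\<forall>x. x \<noteq> 0 \<longrightarrow> 0 < x \<bullet> (A *v x))"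

lemma minv:
  assumes "invertible (A::real^'n^'n)"
  shows "A ** matrix_inv A = mat 1" "matrix_inv A ** A = mat 1"
proof -
  have "\<exists>A'. A ** A' = mat 1 \<and> A' ** A = mat 1" using assms unfolding invertible_def by blast
  then have "A ** matrix_inv A = mat 1 \<and> matrix_inv A ** A = mat 1"
    unfolding matrix_inv_def by (rule someI_ex)
  then show "A ** matrix_inv A = mat 1" "matrix_inv A ** A = mat 1" by auto
qed

lemma minv_vec:
  assumes "invertible (A::real^'n^'n)"
  shows "A *v (matrix_inv A *v x) = x" "matrix_inv A *v (A *v x) = x"
  using minv[OF assms] by (simp_all add: matrix_vector_mul_assoc)

lemma sym_inner:
  assumes "transpose A = (A::real^'n^'n)"
  shows "x \<bullet> (A *v y) = y \<bullet> (A *v x)"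
proof -
  have "x \<bullet> (A *v y) = (transpose A *v x) \<bullet> y"
    by (metis dot_lmul_matrix transpose_matrix_vector)
  then show ?thesis using assms by (simp add: inner_commute)
qed

lemma pd_invertible:
  assumes "pd (A::real^'n^'n)" shows "invertible A"
proof -
  have "\<forall>x. A *v x = 0 \<longrightarrow> x = 0"
    using assms unfolding pd_def by (metis inner_zero_right less_irrefl)
  then obtain B where "B ** A = mat 1" using matrix_left_invertible_ker by blast
  then show ?thesis using invertible_left_inverse by blast
qed

lemma pd_props:
  assumes "pd (A::real^'n^'n)"
  shows "transpose A = A" "invertible A" "\<forall>x. 0 \<le> x \<bullet> (A *v x)"
proof -
  show "transpose A = A" "invertible A" using assms pd_invertible unfolding pd_def by auto
  show "\<forall>x. 0 \<le> x \<bullet> (A *v x)"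
  proof
    fix x show "0 \<le> x \<bullet> (A *v x)"
      using assms unfolding pd_def by (cases "x = 0") (auto intro: less_imp_le)
  qed
qed

lemma minv_sym:
  assumes "transpose A = (A::real^'n^'n)" "invertible A"
  shows "transpose (matrix_inv A) = matrix_inv A"
proof -
  have "A ** transpose (matrix_inv A) = mat 1"
    by (metis assms matrix_transpose_mul minv(2) transpose_mat)
  then have "matrix_inv A ** (A ** transpose (matrix_inv A)) = matrix_inv A" by simp
  then show ?thesis by (simp add: matrix_mul_assoc minv[OF assms(2)])
qed

lemma psd_inv_quad:
  assumes "transpose A = (A::real^'n^'n)" "invertible A" "\<forall>x. 0 \<le> x \<bullet> (A *v x)"
  shows "0 \<le> x \<bullet> (matrix_inv A *v x)"
proof -
  define y where "y = matrix_inv A *v x"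
  have "x = A *v y" by (simp add: y_def minv_vec assms)
  then have "x \<bullet> (matrix_inv A *v x) = (A *v y) \<bullet> y" by (simp add: y_def)
  also have "\<dots> = y \<bullet> (A *v y)" by (simp add: inner_commute)
  finally show ?thesis using assms(3) by simp
qed

lemma variational:
  assumes "transpose A = (A::real^'n^'n)" "invertible A" "\<forall>x. 0 \<le> x \<bullet> (A *v x)"
  shows "2 * (v \<bullet> x) - v \<bullet> (A *v v) \<le> x \<bullet> (matrix_inv A *v x)"
proof -
  define a where "a = matrix_inv A *v x"
  have Aa: "A *v a = x" by (simp add: a_def minv_vec assms)
  have "0 \<le> (v - a) \<bullet> (A *v (v - a))" using assms(3) by blast
  also have "\<dots> = v \<bullet> (A *v v) - v \<bullet> (A *v a) - a \<bullet> (A *v v) + a \<bullet> (A *v a)"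
    by (simp add: matrix_vector_mult_diff_distrib inner_diff_left inner_diff_right)
  also have "a \<bullet> (A *v v) = v \<bullet> (A *v a)" using sym_inner[OF assms(1)] by blast
  finally have "0 \<le> v \<bullet> (A *v v) - 2 * (v \<bullet> x) + a \<bullet> x" by (simp add: Aa)
  then show ?thesis by (simp add: a_def inner_commute)
qed

lemma inv_compare:
  assumes B: "transpose B = (B::real^'n^'n)" "invertible B" "\<forall>x. 0 \<le> x \<bullet> (B *v x)"
    and A: "invertible (A::real^'n^'n)" and c: "c > 0"
    and le: "\<forall>v. v \<bullet> (B *v v) \<le> c * (v \<bullet> (A *v v))"
  shows "x \<bullet> (matrix_inv A *v x) \<le> c * (x \<bullet> (matrix_inv B *v x))"
proof -
  define a where "a = matrix_inv A *v x"
  have Aa: "A *v a = x" by (simp add: a_def minv_vec A)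
  have "2 * ((a /\<^sub>R c) \<bullet> x) - (a /\<^sub>R c) \<bullet> (B *v (a /\<^sub>R c)) \<le> x \<bullet> (matrix_inv B *v x)"
    by (rule variational[OF B])
  moreover have "(a /\<^sub>R c) \<bullet> (B *v (a /\<^sub>R c)) = (a \<bullet> (B *v a)) / c^2"
    by (simp add: matrix_vector_mult_scaleR power2_eq_square inverse_eq_divide)
  moreover have "a \<bullet> (B *v a) \<le> c * (a \<bullet> x)" using le Aa by metis
  moreover have "(a \<bullet> (B *v a)) / c^2 \<le> c * (a \<bullet> x) / c^2"
    using calculation(3) by (simp add: divide_right_mono)
  moreover have "c * (a \<bullet> x) / c^2 = (a \<bullet> x) / c" using c by (simp add: power2_eq_square)
  moreover have "2 * ((a /\<^sub>R c) \<bullet> x) = 2 * ((a \<bullet> x) / c)" by (simp add: inverse_eq_divide)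
  ultimately have "(a \<bullet> x) / c \<le> x \<bullet> (matrix_inv B *v x)" by linarith
  then have "a \<bullet> x \<le> (x \<bullet> (matrix_inv B *v x)) * c" using c by (simp add: pos_divide_le_eq)
  then show ?thesis by (simp add: a_def inner_commute mult.commute)
qed

lemma gen_cs:
  assumes "pd (A::real^'n^'n)"
  shows "(v \<bullet> x)^2 \<le> (x \<bullet> (matrix_inv A *v x)) * (v \<bullet> (A *v v))"
proof (cases "v = 0")
  case True then show ?thesis by simp
next
  case False
  have A: "transpose A = A" "invertible A" "\<forall>x. 0 \<le> x \<bullet> (A *v x)"
    using pd_props[OF assms] by auto
  have q: "0 < v \<bullet> (A *v v)" using assms False unfolding pd_def by blast
  define t where "t = (v \<bullet> x) / (v \<bullet> (A *v v))"
  have "2 * ((t *\<^sub>R v) \<bullet> x) - (t *\<^sub>R v) \<bullet> (A *v (t *\<^sub>R v)) \<le> x \<bullet> (matrix_inv A *v x)"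
    by (rule variational[OF A])
  then have "2 * t * (v \<bullet> x) - t^2 * (v \<bullet> (A *v v)) \<le> x \<bullet> (matrix_inv A *v x)"
    by (simp add: matrix_vector_mult_scaleR power2_eq_square mult_ac)
  then have "(v \<bullet> x)^2 / (v \<bullet> (A *v v)) \<le> x \<bullet> (matrix_inv A *v x)"
    using q by (simp add: t_def power2_eq_square field_simps)
  then show ?thesis using q by (simp add: field_simps)
qed

lemma det_rank1:
  assumes "invertible (A::real^'n^'n)"
  shows "det (A + outer x x) = det A * (1 + x \<bullet> (matrix_inv A *v x))"
proof -
  have "A + outer x x = A ** (mat 1 + outer (matrix_inv A *v x) x)"
    by (simp add: matrix_add_ldistrib mat_mult_outer minv_vec assms)
  then show ?thesis by (simp add: det_mul det_I_outer inner_commute)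
qed

lemma outer_quad: "v \<bullet> (outer x x *v v) = (x \<bullet> v)^2"
  by (simp add: outer_mult_vec power2_eq_square inner_commute)

lemma transpose_outer: "transpose (outer x y) = outer y x"
  by (simp add: outer_def transpose_def vec_eq_iff mult_ac)

lemma transpose_add: "transpose ((A::real^'n^'n) + B) = transpose A + transpose B"
  by (simp add: transpose_def vec_eq_iff)

lemma pd_add_outer:
  assumes "pd A" shows "pd (A + outer x x)"
  using assms unfolding pd_def
  by (auto simp: transpose_add transpose_outer matrix_vector_mult_add_rdistrib inner_add_right outer_quad
      intro: add_pos_nonneg)

lemma pd_quad_nonneg: "pd A \<Longrightarrow> 0 \<le> x \<bullet> (A *v x)"
  using pd_props(3) by blast

lemma multi_update:
  assumes A: "pd (A::real^'n^'n)" and dA: "0 < det A" and fin: "finite J"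
  shows "pd (A + (\<Sum>j\<in>J. outer (x j) (x j)))
    \<and> det A * (1 + (\<Sum>j\<in>J. x j \<bullet> (matrix_inv A *v x j))) \<le> det (A + (\<Sum>j\<in>J. outer (x j) (x j)))
    \<and> (\<forall>v. v \<bullet> ((A + (\<Sum>j\<in>J. outer (x j) (x j))) *v v) \<le> (1 + (\<Sum>j\<in>J. x j \<bullet> (matrix_inv A *v x j))) * (v \<bullet> (A *v v)))"
  using fin
proof (induction J rule: finite_induct)
  case empty
  then show ?case using A by simp
next
  case (insert j J)
  define W where "W = A + (\<Sum>j\<in>J. outer (x j) (x j))"
  define B where "B = (\<Sum>j\<in>J. x j \<bullet> (matrix_inv A *v x j))"
  define b where "b = x j \<bullet> (matrix_inv A *v x j)"
  have IH: "pd W" "det A * (1 + B) \<le> det W" "\<forall>v. v \<bullet> (W *v v) \<le> (1 + B) * (v \<bullet> (A *v v))"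
    using insert.IH unfolding W_def B_def by auto
  have Ap: "transpose A = A" "invertible A" "\<forall>x. 0 \<le> x \<bullet> (A *v x)" using pd_props[OF A] by auto
  have Wp: "transpose W = W" "invertible W" "\<forall>x. 0 \<le> x \<bullet> (W *v x)" using pd_props[OF IH(1)] by auto
  have B0: "0 \<le> B" unfolding B_def by (rule sum_nonneg) (use psd_inv_quad[OF Ap] in auto)
  have b0: "0 \<le> b" unfolding b_def using psd_inv_quad[OF Ap] by auto
  have eqW: "A + (\<Sum>j\<in>insert j J. outer (x j) (x j)) = W + outer (x j) (x j)"
    using insert.hyps by (simp add: W_def add.assoc)
  have eqB: "(\<Sum>j\<in>insert j J. x j \<bullet> (matrix_inv A *v x j)) = B + b"
    using insert.hyps by (simp add: B_def b_def)
  have cmp: "b \<le> (1 + B) * (x j \<bullet> (matrix_inv W *v x j))"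
    unfolding b_def by (rule inv_compare[OF Wp Ap(2)]) (use B0 IH(3) in auto)
  have dW: "det W = det W" ..
  have detW0: "0 < det W" using IH(2) dA B0 by (smt (verit) mult_pos_pos)
  have "det (W + outer (x j) (x j)) = det W * (1 + x j \<bullet> (matrix_inv W *v x j))"
    by (rule det_rank1[OF Wp(2)])
  moreover have "det A * (1 + B + b) \<le> det W * (1 + x j \<bullet> (matrix_inv W *v x j))"
  proof -
    have "det A * (1 + B + b) = det A * (1 + B) + det A * b" by (simp add: algebra_simps)
    also have "\<dots> \<le> det A * (1 + B) + det A * ((1 + B) * (x j \<bullet> (matrix_inv W *v x j)))"
      using cmp dA by simp
    also have "\<dots> = det A * (1 + B) * (1 + x j \<bullet> (matrix_inv W *v x j))" by (simp add: algebra_simps)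
    also have "\<dots> \<le> det W * (1 + x j \<bullet> (matrix_inv W *v x j))"
      by (rule mult_right_mono[OF IH(2)]) (use psd_inv_quad[OF Wp] in \<open>smt (verit)\<close>)
    finally show ?thesis .
  qed
  moreover have "\<forall>v. v \<bullet> ((W + outer (x j) (x j)) *v v) \<le> (1 + (B + b)) * (v \<bullet> (A *v v))"
  proof
    fix v
    have "v \<bullet> ((W + outer (x j) (x j)) *v v) = v \<bullet> (W *v v) + (x j \<bullet> v)^2"
      by (simp add: matrix_vector_mult_add_rdistrib inner_add_right outer_quad)
    also have "(x j \<bullet> v)^2 \<le> b * (v \<bullet> (A *v v))"
      unfolding b_def using gen_cs[OF A, of v "x j"] by (simp add: inner_commute)
    finally show "v \<bullet> ((W + outer (x j) (x j)) *v v) \<le> (1 + (B + b)) * (v \<bullet> (A *v v))"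
      using IH(3) by (simp add: algebra_simps) (smt (verit) IH(3))
  qed
  ultimately show ?case using pd_add_outer[OF IH(1)] by (simp add: eqW eqB add.assoc)
qed

lemma quad_sum: "x \<bullet> ((A::real^'n^'n) *v x) = (\<Sum>i\<in>UNIV. \<Sum>j\<in>UNIV. x$i * A$i$j * x$j)"
  by (simp add: inner_vec_def matrix_vector_mult_def sum_distrib_left mult_ac)

lemma sym_entries: "transpose (A::real^'n^'n) = A \<longleftrightarrow> (\<forall>i j. A$i$j = A$j$i)"
  by (auto simp: transpose_def vec_eq_iff)

lemma outer_scale: "outer (c *\<^sub>R u) (d *\<^sub>R v) = (c * d) *\<^sub>R outer u v"
  by (simp add: outer_def vec_eq_iff mult_ac)

lemma hadamard_step:
  fixes W :: "real^'n^'n" and k :: 'n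
  assumes pdW: "pd W"
  defines "w \<equiv> W$k$k"
  defines "b \<equiv> (\<chi> i. if i = k then 0 else W$i$k)"
  defines "W1 \<equiv> (\<chi> i j. if i = k \<or> j = k then (if i = j then 1 else 0) else W$i$j)"
  defines "W2 \<equiv> W1 - (1/w) *\<^sub>R outer b b"
  shows "0 < w" "pd W1" "pd W2" "det W = w * det W2" "W1 = W2 + outer ((1/sqrt w) *\<^sub>R b) ((1/sqrt w) *\<^sub>R b)"
proof -
  define ek :: "real^'n" where "ek = axis k 1"
  have symW: "\<And>i j. W$i$j = W$j$i" using pd_props(1)[OF pdW] sym_entries by metis
  have qW: "\<And>x. x \<noteq> 0 \<Longrightarrow> 0 < x \<bullet> (W *v x)" using pdW unfolding pd_def by blast
  have qW0: "\<And>x. 0 \<le> x \<bullet> (W *v x)" using pd_props(3)[OF pdW] by blast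
  have "ek \<bullet> (W *v ek) = w" by (simp add: ek_def inner_axis' mvec_axis w_def)
  then show wpos: "0 < w" using qW[of ek] by (simp add: ek_def)
  define P :: "real^'n \<Rightarrow> real^'n" where "P x = (\<chi> i. if i = k then 0 else x$i)" for x
  have q1: "x \<bullet> (W1 *v x) = P x \<bullet> (W *v P x) + (x$k)^2" for x
  proof -
    have "x \<bullet> (W1 *v x) = (\<Sum>i\<in>UNIV. \<Sum>j\<in>UNIV. x$i * W1$i$j * x$j)" by (rule quad_sum)
    also have "\<dots> = (\<Sum>i\<in>UNIV. \<Sum>j\<in>UNIV. P x$i * W$i$j * P x$j + (if j = k then (if i = k then (x$k)^2 else 0) else 0))"
      by (intro sum.cong refl) (auto simp: W1_def P_def power2_eq_square)
    also have "\<dots> = (\<Sum>i\<in>UNIV. \<Sum>j\<in>UNIV. P x$i * W$i$j * P x$j) + (x$k)^2"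
      by (simp only: sum.distrib) (simp add: sum.delta)
    also have "\<dots> = P x \<bullet> (W *v P x) + (x$k)^2" by (simp add: quad_sum)
    finally show ?thesis .
  qed
  have symW1: "transpose W1 = W1" unfolding sym_entries W1_def using symW by auto
  have symO: "transpose (outer b b) = outer b b" by (simp add: transpose_outer)
  have e1: "\<forall>i j. W1$i$j = W1$j$i" using symW1 unfolding sym_entries by blast
  have symW2: "transpose W2 = W2" unfolding sym_entries W2_def
  proof (intro allI)
    fix i j
    have "W1$i$j = W1$j$i" using e1 by blast
    then show "(W1 - (1 / w) *\<^sub>R outer b b) $ i $ j = (W1 - (1 / w) *\<^sub>R outer b b) $ j $ i"
      by (simp add: outer_def mult.commute)
  qed
  show "pd W1" unfolding pd_def
  proof (intro conjI allI impI)
    show "transpose W1 = W1" by (rule symW1)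
    fix x :: "real^'n" assume "x \<noteq> 0"
    show "0 < x \<bullet> (W1 *v x)"
    proof (cases "x$k = 0")
      case True
      then have "P x = x" by (simp add: P_def vec_eq_iff)
      then show ?thesis using q1[of x] qW[OF \<open>x \<noteq> 0\<close>] by (simp add: add_pos_nonneg)
    next
      case False
      then show ?thesis using q1[of x] qW0[of "P x"] by (simp add: add_nonneg_pos)
    qed
  qed
  have bk: "b$k = 0" by (simp add: b_def)
  have WPk: "ek \<bullet> (W *v P x) = b \<bullet> x" for x
  proof -
    have "ek \<bullet> (W *v P x) = (W *v P x)$k" by (simp add: ek_def inner_axis')
    also have "\<dots> = (\<Sum>j\<in>UNIV. W$k$j * P x$j)" by (simp add: matrix_vector_mult_def)
    also have "\<dots> = (\<Sum>j\<in>UNIV. b$j * x$j)"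
      by (intro sum.cong refl) (auto simp: P_def b_def symW)
    finally show ?thesis by (simp add: inner_vec_def)
  qed
  have q2: "x \<bullet> (W2 *v x) = (P x - ((b \<bullet> x)/w) *\<^sub>R ek) \<bullet> (W *v (P x - ((b \<bullet> x)/w) *\<^sub>R ek)) + (x$k)^2" for x
  proof -
    define c where "c = (b \<bullet> x)/w"
    have "x \<bullet> (W2 *v x) = x \<bullet> (W1 *v x) - (1/w) * (b \<bullet> x)^2"
      by (simp add: W2_def matrix_vector_mult_diff_rdistrib inner_diff_right outer_quad scaleR_matrix_vector_assoc[symmetric])
    moreover have "(P x - c *\<^sub>R ek) \<bullet> (W *v (P x - c *\<^sub>R ek))
       = P x \<bullet> (W *v P x) - 2 * c * (ek \<bullet> (W *v P x)) + c^2 * (ek \<bullet> (W *v ek))"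
    proof -
      have s: "ek \<bullet> (W *v P x) = P x \<bullet> (W *v ek)" using sym_inner[OF pd_props(1)[OF pdW]] by blast
      have "(P x - c *\<^sub>R ek) \<bullet> (W *v (P x - c *\<^sub>R ek)) = P x \<bullet> (W *v P x) - c * (P x \<bullet> (W *v ek)) - c * (ek \<bullet> (W *v P x)) + c * c * (ek \<bullet> (W *v ek))"
        by (simp add: matrix_vector_mult_diff_distrib matrix_vector_mult_scaleR inner_diff_left inner_diff_right algebra_simps)
      then show ?thesis using s by (simp add: power2_eq_square)
    qed
    moreover have "ek \<bullet> (W *v ek) = w" by (simp add: ek_def inner_axis' mvec_axis w_def)
    moreover have "- 2 * c * (b \<bullet> x) + c^2 * w = - ((1/w) * (b \<bullet> x)^2)"
      using wpos by (simp add: c_def power2_eq_square field_simps)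
    ultimately have e2: "(P x - c *\<^sub>R ek) \<bullet> (W *v (P x - c *\<^sub>R ek)) = P x \<bullet> (W *v P x) - 2 * c * (b \<bullet> x) + c^2 * w"
      using WPk[of x] by simp
    show ?thesis using q1[of x] e2 \<open>- 2 * c * (b \<bullet> x) + c^2 * w = - ((1/w) * (b \<bullet> x)^2)\<close>
      \<open>x \<bullet> (W2 *v x) = x \<bullet> (W1 *v x) - (1/w) * (b \<bullet> x)^2\<close> unfolding c_def[symmetric] by linarith
  qed
  show "pd W2" unfolding pd_def
  proof (intro conjI allI impI)
    show "transpose W2 = W2" by (rule symW2)
    fix x :: "real^'n" assume "x \<noteq> 0"
    define y where "y = P x - ((b \<bullet> x)/w) *\<^sub>R ek"
    show "0 < x \<bullet> (W2 *v x)"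
    proof (cases "x$k = 0")
      case True
      from \<open>x \<noteq> 0\<close> obtain i where xi: "x$i \<noteq> 0" by (auto simp: vec_eq_iff)
      with True have "i \<noteq> k" by auto
      then have "y$i = x$i" by (simp add: y_def P_def ek_def axis_def)
      with xi have "y \<noteq> 0" by auto
      then show ?thesis using q2[of x] qW[of y] by (simp add: y_def add_pos_nonneg)
    next
      case False
      then show ?thesis using q2[of x] qW0[of y] by (simp add: y_def add_nonneg_pos)
    qed
  qed
  show "W1 = W2 + outer ((1/sqrt w) *\<^sub>R b) ((1/sqrt w) *\<^sub>R b)"
    using wpos by (simp add: W2_def outer_scale real_sqrt_mult[symmetric])
  define D where "D = mat 1 + outer ((w - 1) *\<^sub>R ek) ek"
  define L where "L = mat 1 + outer ((1/w) *\<^sub>R b) ek"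
  have dD: "det D = w" by (simp add: D_def det_I_outer ek_def)
  have dL: "det L = 1" by (simp add: L_def det_I_outer ek_def inner_axis bk)
  have W2e: "W2$i$j = W1$i$j - b$i * b$j / w" for i j by (simp add: W2_def outer_def)
  have ekj: "ek$j = (if j = k then 1 else 0)" for j by (simp add: ek_def axis_def)
  have t1: "ek v* W2 = ek"
    by (simp add: vec_eq_iff ek_def vmat_axis W2e) (auto simp: W1_def bk axis_def)
  define S where "S = W2 + outer ((w - 1) *\<^sub>R ek) ek"
  have S1: "D ** W2 = S" by (simp add: D_def S_def matrix_add_rdistrib' outer_mult_mat t1)
  have Se: "S$i$j = W2$i$j + (w - 1) * ek$i * ek$j" for i j by (simp add: S_def outer_def)
  have t2: "ek v* S = w *\<^sub>R ek"
    unfolding vec_eq_iff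
  proof
    fix j
    show "(ek v* S) $ j = (w *\<^sub>R ek) $ j"
      using wpos by (simp add: ek_def vmat_axis Se W2e) (auto simp: W1_def bk axis_def)
  qed
  have S2: "L ** S = S + outer b ek"
    using wpos by (simp add: L_def matrix_add_rdistrib' outer_mult_mat t2 outer_scale)
  have tL: "transpose L = mat 1 + outer ek ((1/w) *\<^sub>R b)"
    by (simp add: L_def transpose_add transpose_outer)
  have t3: "(S + outer b ek) *v ek = w *\<^sub>R ek + b"
    unfolding vec_eq_iff
  proof
    fix i
    show "((S + outer b ek) *v ek) $ i = (w *\<^sub>R ek + b) $ i"
      using wpos by (simp add: ek_def mvec_axis Se W2e outer_def) (auto simp: W1_def bk axis_def)
  qed
  have S3: "L ** (D ** W2) ** transpose L = S + outer b ek + outer (w *\<^sub>R ek + b) ((1/w) *\<^sub>R b)"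
    by (simp add: S1 S2 tL matrix_add_ldistrib mat_mult_outer t3)
  have "L ** (D ** W2) ** transpose L = W"
    unfolding S3 vec_eq_iff
  proof (intro allI)
    fix i j
    show "(S + outer b ek + outer (w *\<^sub>R ek + b) ((1 / w) *\<^sub>R b)) $ i $ j = W $ i $ j"
      using wpos symW[of k j] by (simp add: Se W2e outer_def ekj) (auto simp: W1_def b_def w_def field_simps)
  qed
  then have "det W = det L * (det D * det W2) * det (transpose L)"
    by (metis det_mul)
  then show "det W = w * det W2" using dD dL by simp
qed

lemma hadamard_aux:
  fixes F :: "'n::finite set"
  shows "\<forall>W::real^'n^'n. pd W \<and> (\<forall>i j. (i \<notin> F \<or> j \<notin> F) \<longrightarrow> W$i$j = (if i = j then 1 else 0))
           \<longrightarrow> 0 < det W \<and> det W \<le> (\<Prod>i\<in>F. W$i$i)"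
proof -
  have "finite F" by simp
  then show ?thesis
  proof (induction F rule: finite_induct)
    case empty
    show ?case
    proof (intro allI impI)
      fix W :: "real^'n^'n"
      assume "pd W \<and> (\<forall>i j. (i \<notin> {} \<or> j \<notin> {}) \<longrightarrow> W$i$j = (if i = j then 1 else 0))"
      then have "W = mat 1" by (simp add: vec_eq_iff mat_def)
      then show "0 < det W \<and> det W \<le> (\<Prod>i\<in>{}. W$i$i)" by simp
    qed
  next
    case (insert k F)
    show ?case
    proof (intro allI impI)
      fix W :: "real^'n^'n"
      assume H: "pd W \<and> (\<forall>i j. (i \<notin> insert k F \<or> j \<notin> insert k F) \<longrightarrow> W$i$j = (if i = j then 1 else 0))"
      define w where "w = W$k$k"
      define b :: "real^'n" where "b = (\<chi> i. if i = k then 0 else W$i$k)"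
      define W1 :: "real^'n^'n" where "W1 = (\<chi> i j. if i = k \<or> j = k then (if i = j then 1 else 0) else W$i$j)"
      define W2 where "W2 = W1 - (1/w) *\<^sub>R outer b b"
      note st = hadamard_step[OF conjunct1[OF H], of k, folded w_def b_def W1_def, folded W2_def]
      have idW1: "\<forall>i j. (i \<notin> F \<or> j \<notin> F) \<longrightarrow> W1$i$j = (if i = j then 1 else 0)"
        using H by (auto simp: W1_def)
      have idW2: "\<forall>i j. (i \<notin> F \<or> j \<notin> F) \<longrightarrow> W2$i$j = (if i = j then 1 else 0)"
      proof (intro allI impI)
        fix i j assume ij: "i \<notin> F \<or> j \<notin> F"
        have "b$i * b$j = 0"
          using ij H by (auto simp: b_def)
        then show "W2$i$j = (if i = j then 1 else 0)"
          using idW1 ij by (simp add: W2_def outer_def)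
      qed
      have d2: "0 < det W2" using insert.IH st(3) idW2 by simp
      have d1: "det W1 \<le> (\<Prod>i\<in>F. W1$i$i)" using insert.IH st(2) idW1 by simp
      have pF: "(\<Prod>i\<in>F. W1$i$i) = (\<Prod>i\<in>F. W$i$i)"
        using insert.hyps by (intro prod.cong refl) (auto simp: W1_def)
      have W2p: "transpose W2 = W2" "invertible W2" "\<forall>x. 0 \<le> x \<bullet> (W2 *v x)" using pd_props[OF st(3)] by auto
      define q where "q = ((1/sqrt w) *\<^sub>R b) \<bullet> (matrix_inv W2 *v ((1/sqrt w) *\<^sub>R b))"
      have "det W1 = det W2 * (1 + q)" unfolding q_def
        by (subst st(5), rule det_rank1[OF W2p(2)])
      moreover have "0 \<le> q" unfolding q_def
        by (rule psd_inv_quad[OF W2p])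
      moreover have "det W2 * 1 \<le> det W2 * (1 + q)"
        using d2 calculation(2) by (intro mult_left_mono) auto
      ultimately have d12: "det W2 \<le> det W1" by simp
      have "det W = w * det W2" by (rule st(4))
      then have "0 < det W" using st(1) d2 by simp
      moreover have "det W \<le> w * (\<Prod>i\<in>F. W$i$i)"
      proof -
        have "w * det W2 \<le> w * det W1" using d12 st(1) by simp
        also have "\<dots> \<le> w * (\<Prod>i\<in>F. W$i$i)" using d1 pF st(1) by simp
        finally show ?thesis using \<open>det W = w * det W2\<close> by simp
      qed
      ultimately show "0 < det W \<and> det W \<le> (\<Prod>i\<in>insert k F. W$i$i)"
        using insert.hyps by (simp add: w_def)
    qed
  qed
qed

lemma hadamard:
  assumes "pd (W::real^'n^'n)"
  shows "0 < det W" "det W \<le> (\<Prod>i\<in>UNIV. W$i$i)"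
  using hadamard_aux[of UNIV] assms by auto

lemma pd_diag_pos: "pd (W::real^'n^'n) \<Longrightarrow> 0 < W$i$i"
  using hadamard_step(1) by blast

lemma logdet_trace:
  assumes "pd (W::real^'n^'n)"
  shows "ln (det W) \<le> real CARD('n) * ln (trace W / real CARD('n))"
proof -
  define n where "n = real CARD('n)"
  define m where "m = trace W / n"
  have n0: "0 < n" by (simp add: n_def)
  have tr: "trace W = (\<Sum>i\<in>UNIV. W$i$i)" by (simp add: trace_def)
  have dpos: "\<And>i. 0 < W$i$i" using pd_diag_pos[OF assms] by blast
  have m0: "0 < m" unfolding m_def tr using n0 dpos
    by (simp add: sum_pos)
  have "ln (det W) \<le> ln (\<Prod>i\<in>UNIV. W$i$i)"
    using hadamard[OF assms] by simp
  also have "\<dots> = (\<Sum>i\<in>UNIV. ln (W$i$i))"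
    by (rule ln_prod) (use dpos in \<open>auto simp: less_imp_neq[symmetric]\<close>)
  also have "\<dots> = (\<Sum>i\<in>UNIV. ln (W$i$i / m)) + n * ln m"
  proof -
    have "(\<Sum>i\<in>UNIV. ln (W$i$i / m)) = (\<Sum>i\<in>UNIV. ln (W$i$i) - ln m)"
      by (intro sum.cong refl) (use dpos m0 in \<open>simp add: ln_div less_imp_neq[symmetric]\<close>)
    then show ?thesis by (simp add: sum_subtractf n_def)
  qed
  also have "(\<Sum>i\<in>UNIV. ln (W$i$i / m)) \<le> (\<Sum>i\<in>UNIV. W$i$i / m - 1)"
    by (intro sum_mono ln_le_minus_one) (use dpos m0 in simp)
  also have "(\<Sum>i\<in>UNIV. W$i$i / m - 1) = 0"
  proof -
    have "(\<Sum>i\<in>UNIV. W$i$i / m - 1) = (\<Sum>i\<in>UNIV. W$i$i) / m - n"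
      by (simp add: sum_subtractf sum_divide_distrib n_def)
    also have "\<dots> = trace W / m - n" by (simp add: tr)
    also have "\<dots> = 0" using m0 n0 by (auto simp: m_def)
    finally show ?thesis .
  qed
  finally show ?thesis by (simp add: n_def m_def)
qed

lemma det_scaled_id: "det (c *\<^sub>R mat 1 :: real^'n^'n) = c ^ CARD('n)"
proof -
  have "det (c *\<^sub>R mat 1 :: real^'n^'n) = (\<Prod>i\<in>UNIV. (c *\<^sub>R mat 1 :: real^'n^'n)$i$i)"
    by (rule det_diagonal) (simp add: mat_def)
  then show ?thesis by (simp add: mat_def)
qed

lemma pd_scaled_id: "c > 0 \<Longrightarrow> pd (c *\<^sub>R mat 1 :: real^'n^'n)"
  unfolding pd_def by (auto simp: transpose_scalar scaleR_matrix_vector_assoc[symmetric])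

lemma trace_outer: "trace (outer x x) = norm x ^ 2"
  by (simp add: trace_def outer_def power2_norm_eq_inner inner_vec_def)

lemma trace_sum: "trace (\<Sum>j\<in>J. (B j :: real^'n^'n)) = (\<Sum>j\<in>J. trace (B j))"
  unfolding trace_def by (simp add: sum_component) (rule sum.swap)

lemma z_le_2ln: fixes z :: real assumes "0 \<le> z" "z \<le> 1" shows "z \<le> 2 * ln (1 + z)"
proof -
  have "ln (1 / (1 + z)) \<le> 1 / (1 + z) - 1" using assms by (intro ln_le_minus_one) auto
  then have "- ln (1 + z) \<le> 1 / (1 + z) - 1" using assms by (simp add: ln_div)
  then have "z / (1 + z) \<le> ln (1 + z)" using assms by (simp add: field_simps)
  moreover have "z / 2 \<le> z / (1 + z)" using assms by (intro divide_left_mono) auto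
  moreover have "z * 2 / (1 + z) = 2 * (z / (1 + z))" by simp
  ultimately show ?thesis by simp
qed

lemma elliptical:
  fixes A :: "nat \<Rightarrow> real^'n^'n" and J :: "nat \<Rightarrow> 'j set" and x :: "nat \<Rightarrow> 'j \<Rightarrow> real^'n"
  assumes lam: "lam > 0" and A1: "A 1 = lam *\<^sub>R mat 1" and finJ: "\<And>t. finite (J t)"
    and upd: "\<And>t. t \<in> {1..T} \<Longrightarrow> A (Suc t) = A t + (\<Sum>j\<in>J t. outer (x t j) (x t j))"
    and small: "\<And>t. t \<in> {1..T} \<Longrightarrow> (\<Sum>j\<in>J t. x t j \<bullet> (matrix_inv (A t) *v x t j)) \<le> 1"
  shows "(\<Sum>t=1..T. \<Sum>j\<in>J t. x t j \<bullet> (matrix_inv (A t) *v x t j))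
     \<le> 2 * real CARD('n) * ln (1 + (\<Sum>t=1..T. \<Sum>j\<in>J t. norm (x t j) ^ 2) / (lam * real CARD('n)))"
proof -
  define z where "z t = (\<Sum>j\<in>J t. x t j \<bullet> (matrix_inv (A t) *v x t j))" for t
  define S where "S m = (\<Sum>t=1..m. \<Sum>j\<in>J t. norm (x t j) ^ 2)" for m
  define n where "n = real CARD('n)"
  have n0: "0 < n" by (simp add: n_def)
  have main: "m \<le> T \<Longrightarrow> pd (A (Suc m)) \<and> n * ln lam + (\<Sum>t=1..m. ln (1 + z t)) \<le> ln (det (A (Suc m)))
      \<and> trace (A (Suc m)) = lam * n + S m
      \<and> (\<forall>t\<in>{1..m}. 0 \<le> z t)" for m
  proof (induction m)
    case 0
    have A1': "A (Suc 0) = lam *\<^sub>R mat 1" using A1 by simp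
    have "det (A (Suc 0)) = lam ^ CARD('n)" by (simp add: A1' det_scaled_id)
    then have "ln (det (A (Suc 0))) = n * ln lam" using lam by (simp add: ln_realpow n_def)
    moreover have "trace (A (Suc 0)) = lam * n" by (simp add: A1' trace_def mat_def n_def)
    ultimately show ?case using pd_scaled_id[OF lam] A1' by (simp add: S_def)
  next
    case (Suc m)
    then have IH: "pd (A (Suc m))" "n * ln lam + (\<Sum>t=1..m. ln (1 + z t)) \<le> ln (det (A (Suc m)))"
      "trace (A (Suc m)) = lam * n + S m" "\<forall>t\<in>{1..m}. 0 \<le> z t" by auto
    have tm: "Suc m \<in> {1..T}" using Suc.prems by auto
    have dpos: "0 < det (A (Suc m))" using hadamard(1)[OF IH(1)] .
    note mu = multi_update[OF IH(1) dpos finJ[of "Suc m"], where x="x (Suc m)"]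
    have eqA: "A (Suc (Suc m)) = A (Suc m) + (\<Sum>j\<in>J (Suc m). outer (x (Suc m) j) (x (Suc m) j))"
      using upd[OF tm] .
    have Ap: "transpose (A (Suc m)) = A (Suc m)" "invertible (A (Suc m))" "\<forall>v. 0 \<le> v \<bullet> (A (Suc m) *v v)"
      using pd_props[OF IH(1)] by auto
    have z0: "0 \<le> z (Suc m)" unfolding z_def
      by (rule sum_nonneg) (use psd_inv_quad[OF Ap] in auto)
    have pdn: "pd (A (Suc (Suc m)))" using mu eqA by simp
    have "det (A (Suc m)) * (1 + z (Suc m)) \<le> det (A (Suc (Suc m)))" using mu eqA by (simp add: z_def)
    then have "ln (det (A (Suc m)) * (1 + z (Suc m))) \<le> ln (det (A (Suc (Suc m))))"
      using dpos z0 by (intro ln_mono) auto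
    then have "ln (det (A (Suc m))) + ln (1 + z (Suc m)) \<le> ln (det (A (Suc (Suc m))))"
      using dpos z0 by (simp add: ln_mult)
    then have L: "n * ln lam + (\<Sum>t=1..Suc m. ln (1 + z t)) \<le> ln (det (A (Suc (Suc m))))"
      using IH(2) by simp
    have "trace (A (Suc (Suc m))) = trace (A (Suc m)) + (\<Sum>j\<in>J (Suc m). norm (x (Suc m) j) ^ 2)"
      by (simp add: eqA trace_add trace_sum trace_outer)
    then have T: "trace (A (Suc (Suc m))) = lam * n + S (Suc m)" using IH(3) by (simp add: S_def)
    show ?case using pdn L T IH(4) z0 by (auto simp: le_Suc_eq)
  qed
  note M = main[OF order_refl]
  have "(\<Sum>t=1..T. z t) \<le> (\<Sum>t=1..T. 2 * ln (1 + z t))"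
    by (intro sum_mono z_le_2ln) (use M small in \<open>auto simp: z_def\<close>)
  also have "\<dots> = 2 * (\<Sum>t=1..T. ln (1 + z t))" by (simp add: sum_distrib_left)
  also have "\<dots> \<le> 2 * (ln (det (A (Suc T))) - n * ln lam)" using M by simp
  also have "ln (det (A (Suc T))) \<le> n * ln ((lam * n + S T) / n)"
    using logdet_trace[OF conjunct1[OF M]] M by (simp add: n_def)
  also have "n * ln ((lam * n + S T) / n) - n * ln lam = n * ln (1 + S T / (lam * n))"
  proof -
    have S0: "0 \<le> S T" unfolding S_def by (intro sum_nonneg) auto
    have "(lam * n + S T) / n = lam * (1 + S T / (lam * n))" using lam n0 by (simp add: field_simps)
    moreover have "0 < 1 + S T / (lam * n)" using S0 lam n0 by (smt (verit) divide_nonneg_pos mult_pos_pos)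
    ultimately have "ln ((lam * n + S T) / n) = ln lam + ln (1 + S T / (lam * n))"
      using lam by (simp add: ln_mult)
    then show ?thesis by (simp add: algebra_simps)
  qed
  finally show ?thesis by (simp add: z_def S_def n_def mult_ac)
qed

locale mnlf =
  fixes S :: "'s set" and f :: "'s \<Rightarrow> real^'d"
  assumes finS: "finite S" and neS: "S \<noteq> {}"
begin

definition Z where "Z \<theta> = (\<Sum>s\<in>S. exp (f s \<bullet> \<theta>))"
definition p where "p \<theta> s = exp (f s \<bullet> \<theta>) / Z \<theta>"
definition fbar where "fbar \<theta> = (\<Sum>s\<in>S. p \<theta> s *\<^sub>R f s)"

lemma Z_pos: "0 < Z \<theta>"
  unfolding Z_def using finS neS by (intro sum_pos) auto

lemma p_pos: "0 < p \<theta> s"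
  unfolding p_def using Z_pos by simp

lemma p_sum: "(\<Sum>s\<in>S. p \<theta> s) = 1"
  unfolding p_def using Z_pos[of \<theta>] by (simp add: sum_divide_distrib[symmetric] Z_def[symmetric])

lemma dZ: "(Z has_derivative (\<lambda>h. \<Sum>s\<in>S. exp (f s \<bullet> \<theta>) * (f s \<bullet> h))) (at \<theta>)"
  unfolding Z_def[abs_def]
  by (auto intro!: derivative_eq_intros simp: mult.commute)

lemma dlnZ: "((\<lambda>\<theta>. ln (Z \<theta>)) has_derivative (\<lambda>h. h \<bullet> fbar \<theta>)) (at \<theta>)"
proof -
  have "((\<lambda>\<theta>. ln (Z \<theta>)) has_derivative (\<lambda>h. (\<Sum>s\<in>S. exp (f s \<bullet> \<theta>) * (f s \<bullet> h)) * inverse (Z \<theta>))) (at \<theta>)"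
    by (rule has_derivative_ln[OF Z_pos dZ])
  moreover have "(\<lambda>h. (\<Sum>s\<in>S. exp (f s \<bullet> \<theta>) * (f s \<bullet> h)) * inverse (Z \<theta>)) = (\<lambda>h. h \<bullet> fbar \<theta>)"
    by (auto simp: fbar_def p_def inner_sum_right sum_distrib_left inner_commute divide_inverse mult_ac)
  ultimately show ?thesis by simp
qed

lemma dp: "((\<lambda>\<theta>. p \<theta> s) has_derivative (\<lambda>h. p \<theta> s * ((f s - fbar \<theta>) \<bullet> h))) (at \<theta>)"
proof -
  have "((\<lambda>\<theta>. exp (f s \<bullet> \<theta>) / Z \<theta>) has_derivative
     (\<lambda>h. - exp (f s \<bullet> \<theta>) * (inverse (Z \<theta>) * (\<Sum>r\<in>S. exp (f r \<bullet> \<theta>) * (f r \<bullet> h)) * inverse (Z \<theta>)) + ((f s \<bullet> h) * exp (f s \<bullet> \<theta>)) / Z \<theta>)) (at \<theta>)"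
    by (intro has_derivative_divide dZ has_derivative_exp DERIV_exp has_derivative_inner_right has_derivative_ident)
      (use Z_pos[of \<theta>] in auto)
  moreover have "(\<lambda>h. - exp (f s \<bullet> \<theta>) * (inverse (Z \<theta>) * (\<Sum>r\<in>S. exp (f r \<bullet> \<theta>) * (f r \<bullet> h)) * inverse (Z \<theta>)) + ((f s \<bullet> h) * exp (f s \<bullet> \<theta>)) / Z \<theta>)
      = (\<lambda>h. p \<theta> s * ((f s - fbar \<theta>) \<bullet> h))"
  proof
    fix h
    have "fbar \<theta> \<bullet> h = (\<Sum>r\<in>S. exp (f r \<bullet> \<theta>) * (f r \<bullet> h)) / Z \<theta>"
      by (simp add: fbar_def p_def inner_sum_left sum_divide_distrib)
    then show "- exp (f s \<bullet> \<theta>) * (inverse (Z \<theta>) * (\<Sum>r\<in>S. exp (f r \<bullet> \<theta>) * (f r \<bullet> h)) * inverse (Z \<theta>)) + ((f s \<bullet> h) * exp (f s \<bullet> \<theta>)) / Z \<theta>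
      = p \<theta> s * ((f s - fbar \<theta>) \<bullet> h)"
      by (simp add: p_def inner_diff_left divide_inverse algebra_simps)
  qed
  ultimately show ?thesis unfolding p_def[abs_def] by simp
qed

lemma dfbar: "(fbar has_derivative (\<lambda>h. \<Sum>s\<in>S. (p \<theta> s * ((f s - fbar \<theta>) \<bullet> h)) *\<^sub>R f s)) (at \<theta>)"
proof -
  have "((\<lambda>\<theta>'. \<Sum>s\<in>S. p \<theta>' s *\<^sub>R f s) has_derivative (\<lambda>h. \<Sum>s\<in>S. (p \<theta> s * ((f s - fbar \<theta>) \<bullet> h)) *\<^sub>R f s)) (at \<theta>)"
    by (intro has_derivative_sum has_derivative_scaleR_left dp)
  moreover have "fbar = (\<lambda>\<theta>'. \<Sum>s\<in>S. p \<theta>' s *\<^sub>R f s)" by (rule ext) (simp add: fbar_def)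
  ultimately show ?thesis by simp
qed


lemma p_nonneg: "0 \<le> p \<theta> s" using p_pos less_imp_le by blast

lemma fbar_inner: "fbar \<theta> \<bullet> v = (\<Sum>s\<in>S. p \<theta> s * (f s \<bullet> v))"
  by (simp add: fbar_def inner_sum_left)

lemma wavg_const: "(\<Sum>s\<in>S. p \<theta> s * c) = c"
  by (simp add: sum_distrib_right[symmetric] p_sum)

lemma var_identity:
  "(\<Sum>s\<in>S. p \<theta> s * (a s - (\<Sum>r\<in>S. p \<theta> r * a r))^2) = (\<Sum>s\<in>S. p \<theta> s * (a s)^2) - (\<Sum>r\<in>S. p \<theta> r * a r)^2"
proof -
  define m where "m = (\<Sum>r\<in>S. p \<theta> r * a r)"
  have "(\<Sum>s\<in>S. p \<theta> s * (a s - m)^2) = (\<Sum>s\<in>S. p \<theta> s * (a s)^2 - 2 * m * (p \<theta> s * a s) + p \<theta> s * m^2)"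
    by (intro sum.cong refl) (simp add: power2_eq_square algebra_simps)
  also have "\<dots> = (\<Sum>s\<in>S. p \<theta> s * (a s)^2) - 2 * m * m + m^2"
    by (simp add: sum.distrib sum_subtractf sum_distrib_left[symmetric] m_def wavg_const)
  finally show ?thesis by (simp add: m_def power2_eq_square)
qed

definition Hm where "Hm \<theta> = (\<Sum>s\<in>S. p \<theta> s *\<^sub>R outer (f s - fbar \<theta>) (f s - fbar \<theta>))"

lemma sum_mat_vec: "(\<Sum>s\<in>A. (M s :: real^'n^'n)) *v h = (\<Sum>s\<in>A. M s *v h)"
  by (induction A rule: infinite_finite_induct) (auto simp: matrix_vector_mult_add_rdistrib)

lemma Hm_vec1: "Hm \<theta> *v h = (\<Sum>s\<in>S. (p \<theta> s * ((f s - fbar \<theta>) \<bullet> h)) *\<^sub>R (f s - fbar \<theta>))"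
  unfolding Hm_def sum_mat_vec
  by (intro sum.cong refl) (simp add: scaleR_matrix_vector_assoc[symmetric] outer_mult_vec)

lemma Hm_vec: "Hm \<theta> *v h = (\<Sum>s\<in>S. (p \<theta> s * ((f s - fbar \<theta>) \<bullet> h)) *\<^sub>R f s)"
proof -
  have z: "(\<Sum>s\<in>S. p \<theta> s * ((f s - fbar \<theta>) \<bullet> h)) = 0"
    by (simp add: inner_diff_left right_diff_distrib sum_subtractf fbar_inner[symmetric] wavg_const)
  have "Hm \<theta> *v h = (\<Sum>s\<in>S. (p \<theta> s * ((f s - fbar \<theta>) \<bullet> h)) *\<^sub>R f s) - (\<Sum>s\<in>S. p \<theta> s * ((f s - fbar \<theta>) \<bullet> h)) *\<^sub>R fbar \<theta>"
    unfolding Hm_vec1 by (simp add: scaleR_diff_right sum_subtractf scaleR_sum_left)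
  then show ?thesis using z by simp
qed

lemma Hm_quad: "v \<bullet> (Hm \<theta> *v v) = (\<Sum>s\<in>S. p \<theta> s * ((f s - fbar \<theta>) \<bullet> v)^2)"
  unfolding Hm_vec1 by (simp add: inner_sum_right power2_eq_square inner_commute mult_ac)

lemma Hm_sym: "transpose (Hm \<theta>) = Hm \<theta>"
proof -
  have "transpose (Hm \<theta>) = (\<Sum>s\<in>S. p \<theta> s *\<^sub>R transpose (outer (f s - fbar \<theta>) (f s - fbar \<theta>)))"
    unfolding Hm_def by (simp add: transpose_def vec_eq_iff sum_component)
  then show ?thesis by (simp add: transpose_outer Hm_def)
qed

lemma Hm_psd: "0 \<le> v \<bullet> (Hm \<theta> *v v)"
  unfolding Hm_quad by (intro sum_nonneg mult_nonneg_nonneg p_nonneg) auto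

lemma Hm_outer: "Hm \<theta> = (\<Sum>s\<in>S. outer (sqrt (p \<theta> s) *\<^sub>R (f s - fbar \<theta>)) (sqrt (p \<theta> s) *\<^sub>R (f s - fbar \<theta>)))"
  unfolding Hm_def outer_scale using p_nonneg by (simp add: real_sqrt_mult[symmetric])

lemma Hm_lower:
  assumes s1: "s1 \<in> S" and s0: "s0 \<in> S" and f0: "f s0 = 0"
  shows "p \<theta> s1 * p \<theta> s0 * (f s1 \<bullet> v)^2 \<le> v \<bullet> (Hm \<theta> *v v)"
proof (cases "s1 = s0")
  case True then show ?thesis using f0 Hm_psd by simp
next
  case False
  define a where "a s = f s \<bullet> v" for s
  define m where "m = (\<Sum>r\<in>S. p \<theta> r * a r)"
  have fb: "fbar \<theta> \<bullet> v = m" by (simp add: fbar_inner m_def a_def)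
  have "v \<bullet> (Hm \<theta> *v v) = (\<Sum>s\<in>S. p \<theta> s * (a s - m)^2)"
    unfolding Hm_quad by (simp add: inner_diff_left a_def fb)
  also have "\<dots> = (\<Sum>s\<in>S. p \<theta> s * (a s)^2) - m^2"
    unfolding m_def by (rule var_identity)
  finally have V: "v \<bullet> (Hm \<theta> *v v) = (\<Sum>s\<in>S. p \<theta> s * (a s)^2) - m^2" .
  have DS: "(\<Sum>s\<in>S. \<Sum>r\<in>S. p \<theta> s * p \<theta> r * (a s - a r)^2) = 2 * ((\<Sum>s\<in>S. p \<theta> s * (a s)^2) - m^2)"
  proof -
    have "(\<Sum>s\<in>S. \<Sum>r\<in>S. p \<theta> s * p \<theta> r * (a s - a r)^2)
      = (\<Sum>s\<in>S. \<Sum>r\<in>S. p \<theta> r * (p \<theta> s * (a s)^2) - 2 * (p \<theta> s * a s) * (p \<theta> r * a r) + p \<theta> s * (p \<theta> r * (a r)^2))"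
      by (intro sum.cong refl) (simp add: power2_eq_square algebra_simps)
    also have "\<dots> = (\<Sum>s\<in>S. \<Sum>r\<in>S. p \<theta> r * (p \<theta> s * (a s)^2)) - (\<Sum>s\<in>S. \<Sum>r\<in>S. 2 * (p \<theta> s * a s) * (p \<theta> r * a r)) + (\<Sum>s\<in>S. \<Sum>r\<in>S. p \<theta> s * (p \<theta> r * (a r)^2))"
      by (simp only: sum.distrib sum_subtractf)
    also have "(\<Sum>s\<in>S. \<Sum>r\<in>S. p \<theta> r * (p \<theta> s * (a s)^2)) = (\<Sum>s\<in>S. p \<theta> s * (a s)^2)"
      by (simp add: wavg_const)
    also have "(\<Sum>s\<in>S. \<Sum>r\<in>S. 2 * (p \<theta> s * a s) * (p \<theta> r * a r)) = 2 * m * m"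
    proof -
      have "(\<Sum>s\<in>S. \<Sum>r\<in>S. 2 * (p \<theta> s * a s) * (p \<theta> r * a r)) = (\<Sum>s\<in>S. (2 * (p \<theta> s * a s)) * m)"
        by (intro sum.cong refl) (simp add: m_def sum_distrib_left)
      also have "\<dots> = (\<Sum>s\<in>S. 2 * (p \<theta> s * a s)) * m" by (simp add: sum_distrib_right)
      also have "(\<Sum>s\<in>S. 2 * (p \<theta> s * a s)) = 2 * m" by (simp add: m_def sum_distrib_left)
      finally show ?thesis by simp
    qed
    also have "(\<Sum>s\<in>S. \<Sum>r\<in>S. p \<theta> s * (p \<theta> r * (a r)^2)) = (\<Sum>s\<in>S. p \<theta> s * (a s)^2)"
      by (simp add: sum_distrib_left[symmetric] wavg_const)
    also have "(\<Sum>s\<in>S. p \<theta> s * (a s)^2) - 2 * m * m + (\<Sum>s\<in>S. p \<theta> s * (a s)^2) = 2 * ((\<Sum>s\<in>S. p \<theta> s * (a s)^2) - m^2)"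
      by (simp add: power2_eq_square)
    finally show ?thesis .
  qed
  have nn: "\<And>s r. 0 \<le> p \<theta> s * p \<theta> r * (a s - a r)^2" using p_nonneg by simp
  have "p \<theta> s1 * p \<theta> s0 * (a s1 - a s0)^2 + p \<theta> s0 * p \<theta> s1 * (a s0 - a s1)^2
        \<le> (\<Sum>r\<in>S. p \<theta> s1 * p \<theta> r * (a s1 - a r)^2) + (\<Sum>r\<in>S. p \<theta> s0 * p \<theta> r * (a s0 - a r)^2)"
    by (intro add_mono member_le_sum) (use s0 s1 nn finS in auto)
  also have "\<dots> = (\<Sum>s\<in>{s1, s0}. \<Sum>r\<in>S. p \<theta> s * p \<theta> r * (a s - a r)^2)"
    using False by simp
  also have "\<dots> \<le> (\<Sum>s\<in>S. \<Sum>r\<in>S. p \<theta> s * p \<theta> r * (a s - a r)^2)"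
    by (intro sum_mono2 finS) (use s0 s1 nn in \<open>auto intro: sum_nonneg\<close>)
  finally have "2 * (p \<theta> s1 * p \<theta> s0 * (a s1)^2) \<le> 2 * (v \<bullet> (Hm \<theta> *v v))"
    using DS V f0 by (simp add: a_def power2_eq_square algebra_simps)
  then show ?thesis by (simp add: a_def)
qed

lemma Hm_trace_bound:
  assumes L: "\<And>s. s \<in> S \<Longrightarrow> norm (f s) \<le> L"
  shows "(\<Sum>s\<in>S. p \<theta> s * (norm (f s - fbar \<theta>))^2) \<le> L^2"
proof -
  have "(\<Sum>s\<in>S. p \<theta> s * (norm (f s - fbar \<theta>))^2)
      = (\<Sum>s\<in>S. p \<theta> s * (f s \<bullet> f s) - 2 * (p \<theta> s * (f s \<bullet> fbar \<theta>)) + p \<theta> s * (fbar \<theta> \<bullet> fbar \<theta>))"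
    by (intro sum.cong refl) (simp add: power2_norm_eq_inner inner_diff_left inner_diff_right inner_commute algebra_simps)
  also have "\<dots> = (\<Sum>s\<in>S. p \<theta> s * (f s \<bullet> f s)) - (fbar \<theta> \<bullet> fbar \<theta>)"
    by (simp add: sum.distrib sum_subtractf sum_distrib_left[symmetric] wavg_const fbar_inner[symmetric])
  also have "\<dots> \<le> (\<Sum>s\<in>S. p \<theta> s * (f s \<bullet> f s))" by simp
  also have "\<dots> \<le> (\<Sum>s\<in>S. p \<theta> s * L^2)"
  proof (intro sum_mono mult_left_mono p_nonneg)
    fix s assume "s \<in> S"
    then have "norm (f s) \<le> L" by (rule L)
    then show "f s \<bullet> f s \<le> L^2"
      by (simp add: power2_norm_eq_inner[symmetric] power_mono)
  qed
  also have "\<dots> = L^2" by (rule wavg_const)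
  finally show ?thesis .
qed

lemma jensen_quad:
  assumes sym: "transpose M = (M::real^'d^'d)" and psd: "\<forall>x. 0 \<le> x \<bullet> (M *v x)"
  shows "fbar \<theta> \<bullet> (M *v fbar \<theta>) \<le> (\<Sum>s\<in>S. p \<theta> s * (f s \<bullet> (M *v f s)))"
proof -
  define g where "g = fbar \<theta>"
  have c: "(\<Sum>s\<in>S. p \<theta> s * (g \<bullet> (M *v f s))) = g \<bullet> (M *v g)"
  proof -
    have "(\<Sum>s\<in>S. p \<theta> s * (g \<bullet> (M *v f s))) = (\<Sum>s\<in>S. p \<theta> s * ((M *v g) \<bullet> f s))"
      using sym_inner[OF sym] by (simp add: inner_commute)
    also have "\<dots> = (M *v g) \<bullet> g" by (simp add: g_def fbar_inner inner_commute)
    finally show ?thesis by (simp add: inner_commute)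
  qed
  have "0 \<le> (\<Sum>s\<in>S. p \<theta> s * ((f s - g) \<bullet> (M *v (f s - g))))"
    using psd p_nonneg by (intro sum_nonneg mult_nonneg_nonneg) auto
  also have "\<dots> = (\<Sum>s\<in>S. p \<theta> s * (f s \<bullet> (M *v f s)) - 2 * (p \<theta> s * (g \<bullet> (M *v f s))) + p \<theta> s * (g \<bullet> (M *v g)))"
  proof (intro sum.cong refl)
    fix s
    have "f s \<bullet> (M *v g) = g \<bullet> (M *v f s)" using sym_inner[OF sym] by blast
    then show "p \<theta> s * ((f s - g) \<bullet> (M *v (f s - g))) = p \<theta> s * (f s \<bullet> (M *v f s)) - 2 * (p \<theta> s * (g \<bullet> (M *v f s))) + p \<theta> s * (g \<bullet> (M *v g))"
      by (simp add: matrix_vector_mult_diff_distrib inner_diff_left inner_diff_right algebra_simps)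
  qed
  also have "\<dots> = (\<Sum>s\<in>S. p \<theta> s * (f s \<bullet> (M *v f s))) - 2 * (g \<bullet> (M *v g)) + g \<bullet> (M *v g)"
    by (simp add: sum.distrib sum_subtractf sum_distrib_left[symmetric] c wavg_const)
  finally show ?thesis by (simp add: g_def)
qed

end

lemma grad_unique:
  assumes "GDERIV F x :> D" shows "grad F x = D"
proof -
  have g: "GDERIV F x :> grad F x" unfolding grad_def by (rule someI[of _ D]) (rule assms)
  have "(\<lambda>h. h \<bullet> grad F x) = (\<lambda>h. h \<bullet> D)"
    using has_derivative_unique g assms unfolding gderiv_def by blast
  then have "(grad F x - D) \<bullet> grad F x = (grad F x - D) \<bullet> D" by meson
  then have "(grad F x - D) \<bullet> (grad F x - D) = 0" by (simp add: inner_diff_right)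
  then show ?thesis by simp
qed

lemma hess_unique:
  assumes "((\<lambda>y. grad F y) has_derivative (\<lambda>h. H *v h)) (at x)" shows "hess F x = H"
proof -
  have g: "((\<lambda>y. grad F y) has_derivative (\<lambda>h. hess F x *v h)) (at x)"
    unfolding hess_def by (rule someI[of _ H]) (rule assms)
  have "(\<lambda>h. hess F x *v h) = (\<lambda>h. H *v h)"
    using has_derivative_unique g assms by blast
  then show ?thesis by (simp add: matrix_eq fun_eq_iff)
qed

context mnlf
begin

lemma loss_eq:
  assumes y: "y \<in> S"
  shows "- (\<Sum>s\<in>S. (if y = s then 1 else 0) * ln (p \<theta> s)) = ln (Z \<theta>) - f y \<bullet> \<theta>"
proof -
  have "(\<Sum>s\<in>S. (if y = s then 1 else 0) * ln (p \<theta> s)) = ln (p \<theta> y)"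
    using y finS by (simp add: if_distrib[where f="\<lambda>c. c * _"] sum.delta cong: if_cong)
  also have "\<dots> = f y \<bullet> \<theta> - ln (Z \<theta>)"
    using Z_pos[of \<theta>] by (simp add: p_def ln_div)
  finally show ?thesis by simp
qed

lemma grad_loss:
  assumes y: "y \<in> S"
  shows "grad (\<lambda>\<theta>. - (\<Sum>s\<in>S. (if y = s then 1 else 0) * ln (p \<theta> s))) \<theta> = fbar \<theta> - f y"
proof -
  have e: "(\<lambda>\<theta>. - (\<Sum>s\<in>S. (if y = s then 1 else 0) * ln (p \<theta> s))) = (\<lambda>\<theta>. ln (Z \<theta>) - f y \<bullet> \<theta>)"
    using loss_eq[OF y] by blast
  have "((\<lambda>\<theta>. ln (Z \<theta>) - f y \<bullet> \<theta>) has_derivative (\<lambda>h. h \<bullet> fbar \<theta> - f y \<bullet> h)) (at \<theta>)"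
    by (intro has_derivative_diff dlnZ has_derivative_inner_right has_derivative_ident)
  then have "GDERIV (\<lambda>\<theta>. ln (Z \<theta>) - f y \<bullet> \<theta>) \<theta> :> (fbar \<theta> - f y)"
    unfolding gderiv_def by (simp add: inner_diff_right inner_commute)
  then show ?thesis unfolding e by (rule grad_unique)
qed

lemma hess_loss:
  assumes y: "y \<in> S"
  shows "hess (\<lambda>\<theta>. - (\<Sum>s\<in>S. (if y = s then 1 else 0) * ln (p \<theta> s))) \<theta> = Hm \<theta>"
proof (rule hess_unique)
  have "((\<lambda>\<theta>. fbar \<theta> - f y) has_derivative (\<lambda>h. (\<Sum>s\<in>S. (p \<theta> s * ((f s - fbar \<theta>) \<bullet> h)) *\<^sub>R f s) - 0)) (at \<theta>)"
    by (intro has_derivative_diff dfbar has_derivative_const)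
  then show "((\<lambda>\<theta>. grad (\<lambda>\<theta>. - (\<Sum>s\<in>S. (if y = s then 1 else 0) * ln (p \<theta> s))) \<theta>) has_derivative (\<lambda>h. Hm \<theta> *v h)) (at \<theta>)"
    by (simp add: grad_loss[OF y] Hm_vec)
qed

end

lemma mnl_prob_eq: "mnlf (Sr s a) \<Longrightarrow> mnl_prob Sr phi s a \<theta> s' = mnlf.p (Sr s a) (phi s a) \<theta> s'"
  by (simp add: mnl_prob_def mnlf.p_def mnlf.Z_def)

lemma mnl_loss_eq: "mnlf (Sr (st t) (ac t)) \<Longrightarrow> mnl_loss Sr phi st ac t = (\<lambda>\<theta>. - (\<Sum>s\<in>Sr (st t) (ac t). (if st (Suc t) = s then 1 else 0) * ln (mnlf.p (Sr (st t) (ac t)) (phi (st t) (ac t)) \<theta> s)))"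
  by (simp add: fun_eq_iff mnl_loss_def mnl_prob_eq)

lemma Sigma_1: "Sigma Sr phi st ac L\<theta> lam \<eta> 1 = lam *\<^sub>R mat 1"
  by (simp add: Sigma_def)

lemma Sigma_Suc: "1 \<le> t \<Longrightarrow> Sigma Sr phi st ac L\<theta> lam \<eta> (Suc t) = Sigma Sr phi st ac L\<theta> lam \<eta> t
   + hess (mnl_loss Sr phi st ac t) (theta_hat Sr phi st ac L\<theta> lam \<eta> (Suc t))"
  by (cases t) (auto simp: Sigma_def theta_hat_def Let_def)

lemma theta_in:
  fixes phi :: "'s \<Rightarrow> 'b \<Rightarrow> 's \<Rightarrow> real^'d"
  assumes "0 \<le> L\<theta>"
  shows "norm (theta_hat Sr phi st ac L\<theta> lam \<eta> (Suc t)) \<le> L\<theta>"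
proof (cases t)
  case 0 then show ?thesis using assms by (simp add: theta_hat_def)
next
  case (Suc k)
  define \<theta>t where "\<theta>t = fst (mnl_est Sr phi st ac L\<theta> lam \<eta> k)"
  define \<Sigma>t where "\<Sigma>t = snd (mnl_est Sr phi st ac L\<theta> lam \<eta> k)"
  define lt where "lt = mnl_loss Sr phi st ac (Suc k)"
  define g where "g = grad lt \<theta>t"
  define M where "M = \<Sigma>t + \<eta> *\<^sub>R hess lt \<theta>t"
  define F where "F = (\<lambda>\<theta>. g \<bullet> (\<theta> - \<theta>t) + 1 / (2 * \<eta>) * wnorm2 M (\<theta> - \<theta>t))"
  define B where "B = {\<theta>::real^'d. norm \<theta> \<le> L\<theta>}"
  have th: "theta_hat Sr phi st ac L\<theta> lam \<eta> (Suc t) = arg_min_on F B"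
    by (simp add: Suc theta_hat_def Let_def F_def B_def g_def M_def lt_def \<theta>t_def \<Sigma>t_def)
  have cB: "compact B" unfolding B_def using compact_cball[of "0::real^'d" L\<theta>]
    by (simp add: cball_def dist_0_norm)
  have neB: "B \<noteq> {}" using assms by (auto simp: B_def intro: exI[of _ 0])
  have cF: "continuous_on B F" unfolding F_def wnorm2_def
    by (intro continuous_intros bounded_linear.continuous_on[OF matrix_vector_mul_bounded_linear])
  obtain x where x: "x \<in> B" "\<forall>y\<in>B. F x \<le> F y" using continuous_attains_inf[OF cB neB cF] by blast
  have "is_arg_min F (\<lambda>x. x \<in> B) x" using x unfolding is_arg_min_def by (auto simp: not_less)
  then have "is_arg_min F (\<lambda>x. x \<in> B) (arg_min_on F B)"
    unfolding arg_min_on_def arg_min_def by (rule someI)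
  then have "arg_min_on F B \<in> B" by (simp add: is_arg_min_def)
  then show ?thesis using th by (simp add: B_def)
qed

lemma quad_diff_le:
  assumes psd: "\<forall>x. 0 \<le> x \<bullet> ((M::real^'n^'n) *v x)"
  shows "(a - b) \<bullet> (M *v (a - b)) \<le> 2 * (a \<bullet> (M *v a)) + 2 * (b \<bullet> (M *v b))"
proof -
  have "(a - b) \<bullet> (M *v (a - b)) + (a + b) \<bullet> (M *v (a + b)) = 2 * (a \<bullet> (M *v a)) + 2 * (b \<bullet> (M *v b))"
    by (simp add: matrix_vector_mult_diff_distrib matrix_vector_right_distrib inner_diff_left inner_diff_right
        inner_add_left inner_add_right)
  moreover have "0 \<le> (a + b) \<bullet> (M *v (a + b))" using psd by blast
  ultimately show ?thesis by linarith
qed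

lemma minv_scaled:
  assumes "(c::real) \<noteq> 0"
  shows "matrix_inv (c *\<^sub>R mat 1 :: real^'n^'n) = (1/c) *\<^sub>R mat 1"
proof -
  have AB: "(c *\<^sub>R mat 1 :: real^'n^'n) ** ((1/c) *\<^sub>R mat 1) = mat 1"
    using assms by (simp add: matrix_eq scaleR_matrix_vector_assoc[symmetric] matrix_vector_mul_assoc[symmetric])
  then have inv: "invertible (c *\<^sub>R mat 1 :: real^'n^'n)" using invertible_right_inverse by blast
  have "matrix_inv (c *\<^sub>R mat 1 :: real^'n^'n) = matrix_inv (c *\<^sub>R mat 1) ** ((c *\<^sub>R mat 1) ** ((1/c) *\<^sub>R mat 1))"
    by (simp add: AB)
  also have "\<dots> = (1/c) *\<^sub>R mat 1" by (simp add: matrix_mul_assoc minv(2)[OF inv])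
  finally show ?thesis .
qed

lemma pd_add_psd:
  assumes "pd A" "transpose B = (B::real^'n^'n)" "\<forall>x. 0 \<le> x \<bullet> (B *v x)"
  shows "pd (A + B)"
  using assms unfolding pd_def
  by (auto simp: transpose_add matrix_vector_mult_add_rdistrib inner_add_right intro: add_pos_nonneg)

lemma quad_scaled_inv:
  assumes "(lam::real) > 0"
  shows "x \<bullet> (matrix_inv (lam *\<^sub>R mat 1 :: real^'n^'n) *v x) = norm x ^ 2 / lam"
  using assms by (simp add: minv_scaled scaleR_matrix_vector_assoc[symmetric] power2_norm_eq_inner divide_inverse mult.commute)

theorem lemma27:
  fixes Sr :: "'s::finite \<Rightarrow> 'a::finite \<Rightarrow> 's set"
    and phi :: "'s \<Rightarrow> 'a \<Rightarrow> 's \<Rightarrow> real^'d"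
    and st :: "nat \<Rightarrow> 's" and ac :: "nat \<Rightarrow> 'a"
    and \<theta>star :: "real^'d"
    and L\<phi> L\<theta> \<kappa> lam \<eta> :: real and T :: nat
  assumes A1_phi: "\<And>s a s'. norm (phi s a s') \<le> L\<phi>"
    and A1_theta: "norm \<theta>star \<le> L\<theta>"
    and A2: "\<And>t s' s'' \<theta>. t \<in> {1..T} \<Longrightarrow> s' \<in> Sr (st t) (ac t) \<Longrightarrow> s'' \<in> Sr (st t) (ac t) \<Longrightarrow>
              norm \<theta> \<le> L\<theta> \<Longrightarrow>
              mnl_prob Sr phi (st t) (ac t) \<theta> s' * mnl_prob Sr phi (st t) (ac t) \<theta> s'' \<ge> \<kappa>"
    and kappa: "0 < \<kappa>" "\<kappa> < 1"
    and A3: "\<And>s a. \<exists>s'\<in>Sr s a. phi s a s' = 0"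
    and traj: "\<And>t. st (Suc t) \<in> Sr (st t) (ac t)"
    and eta: "\<eta> > 0"
    and lam_pos: "lam > 0"
    and lam: "lam \<ge> L\<phi>\<^sup>2"
  defines "d \<equiv> real CARD('d)"
    and "p \<equiv> \<lambda>t s'. mnl_prob Sr phi (st t) (ac t) (theta_hat Sr phi st ac L\<theta> lam \<eta> (Suc t)) s'"
    and "\<Sigma>inv \<equiv> \<lambda>t. matrix_inv (Sigma Sr phi st ac L\<theta> lam \<eta> t)"
    and "phihat \<equiv> \<lambda>t s'. phi (st t) (ac t) s'
                  - (\<Sum>s''\<in>Sr (st t) (ac t).
                      mnl_prob Sr phi (st t) (ac t) (theta_hat Sr phi st ac L\<theta> lam \<eta> (Suc t)) s''
                        *\<^sub>R phi (st t) (ac t) s'')"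
    and "B \<equiv> ln (1 + real T * real (Ucard Sr) * L\<phi>\<^sup>2 / (lam * real CARD('d)))"
  shows "((\<Sum>t=1..T. Max ((\<lambda>s'. wnorm2 (\<Sigma>inv t) (phi (st t) (ac t) s')) ` Sr (st t) (ac t)))
           \<le> 2 * d / \<kappa> * B)
    \<and> ((\<Sum>t=1..T. \<Sum>s'\<in>Sr (st t) (ac t). p t s' * wnorm2 (\<Sigma>inv t) (phihat t s')) \<le> 2 * d * B)
    \<and> ((\<Sum>t=1..T. Max ((\<lambda>s'. wnorm2 (\<Sigma>inv t) (phihat t s')) ` Sr (st t) (ac t)))
           \<le> 8 * d / \<kappa> * B)"
proof -
  note defs = assms(11-15)
  have Lth: "0 \<le> L\<theta>" using A1_theta norm_ge_zero order_trans by blast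
  define S where "S t = Sr (st t) (ac t)" for t
  define F where "F t = phi (st t) (ac t)" for t
  define th where "th t = theta_hat Sr phi st ac L\<theta> lam \<eta> t" for t
  define Sg where "Sg t = Sigma Sr phi st ac L\<theta> lam \<eta> t" for t
  define P where "P t = mnlf.p (S t) (F t) (th (Suc t))" for t
  define fb where "fb t = mnlf.fbar (S t) (F t) (th (Suc t))" for t
  define H where "H t = mnlf.Hm (S t) (F t) (th (Suc t))" for t
  have mS: "mnlf (S t)" for t unfolding mnlf_def S_def using A3 by auto
  have finS: "finite (S t)" for t by simp
  have neS: "S t \<noteq> {}" for t using mS[of t] unfolding mnlf_def by blast
  have thin: "norm (th (Suc t)) \<le> L\<theta>" for t unfolding th_def by (rule theta_in[OF Lth])
  have mP: "mnl_prob Sr phi (st t) (ac t) \<theta> s = mnlf.p (S t) (F t) \<theta> s" for t \<theta> s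
    using mnl_prob_eq[of Sr "st t" "ac t"] mS[of t] by (simp add: S_def F_def)
  have pP: "p t s = P t s" for t s
    by (simp add: defs(2) P_def mP th_def)
  have fbE: "mnlf.fbar (S t) (F t) \<theta> = (\<Sum>s\<in>S t. mnlf.p (S t) (F t) \<theta> s *\<^sub>R F t s)" for t \<theta>
    using mnlf.fbar_def[OF mS[of t]] .
  have phF: "phihat t s = F t s - fb t" for t s
    unfolding defs(4) fb_def fbE by (simp add: mP S_def F_def th_def)
  have SgSuc: "Sg (Suc t) = Sg t + H t" if "1 \<le> t" for t
  proof -
    have "hess (mnl_loss Sr phi st ac t) (th (Suc t)) = H t"
      unfolding mnl_loss_eq[where Sr=Sr and st=st and ac=ac and t=t and phi=phi, OF mS[of t, unfolded S_def]] H_def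
      using mnlf.hess_loss[OF mS, of "st (Suc t)" t "F t"] traj[of t] by (simp add: S_def F_def mnlf.p_def[OF mS])
    then show ?thesis using Sigma_Suc[OF that, where Sr=Sr and phi=phi and st=st and ac=ac and L\<theta>=L\<theta> and lam=lam and \<eta>=\<eta>] by (simp add: Sg_def th_def)
  qed
  have Sg1: "Sg 1 = lam *\<^sub>R mat 1" unfolding Sg_def by (rule Sigma_1)
  have P0: "0 \<le> P t s" for t s unfolding P_def by (rule mnlf.p_nonneg[OF mS])
  have Psum: "(\<Sum>s\<in>S t. P t s) = 1" for t unfolding P_def by (rule mnlf.p_sum[OF mS])
  have Hsym: "transpose (H t) = H t" for t unfolding H_def by (rule mnlf.Hm_sym[OF mS])
  have Hpsd: "\<forall>v. 0 \<le> v \<bullet> (H t *v v)" for t unfolding H_def using mnlf.Hm_psd[OF mS] by blast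
  have lamI: "pd (lam *\<^sub>R mat 1 :: real^'d^'d)" by (rule pd_scaled_id[OF lam_pos])
  have Sgpd: "pd (Sg t) \<and> (\<forall>v. v \<bullet> ((lam *\<^sub>R mat 1) *v v) \<le> v \<bullet> (Sg t *v v))" if "1 \<le> t" for t
    using that
  proof (induction t rule: nat_induct_at_least)
    case base then show ?case using lamI Sg1 by simp
  next
    case (Suc t)
    have "v \<bullet> ((lam *\<^sub>R mat 1) *v v) \<le> v \<bullet> (Sg (Suc t) *v v)" for v
    proof -
      have "v \<bullet> ((lam *\<^sub>R mat 1) *v v) \<le> v \<bullet> (Sg t *v v)" using Suc.IH by blast
      moreover have "0 \<le> v \<bullet> (H t *v v)" using Hpsd by blast
      ultimately show ?thesis using SgSuc[OF Suc.hyps] by (simp add: matrix_vector_mult_add_rdistrib inner_add_right)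
    qed
    then show ?case using SgSuc[OF Suc.hyps] pd_add_psd[OF _ Hsym Hpsd] Suc.IH by auto
  qed
  have Sgquad: "x \<bullet> (matrix_inv (Sg t) *v x) \<le> norm x ^ 2 / lam" if "1 \<le> t" for t x
  proof -
    have "x \<bullet> (matrix_inv (Sg t) *v x) \<le> 1 * (x \<bullet> (matrix_inv (lam *\<^sub>R mat 1 :: real^'d^'d) *v x))"
      by (rule inv_compare[OF pd_props[OF lamI] pd_props(2)[OF conjunct1[OF Sgpd[OF that]]]])
        (use Sgpd[OF that] in auto)
    then show ?thesis by (simp add: quad_scaled_inv[OF lam_pos])
  qed
  have dpos: "0 < d" by (simp add: defs(1))
  have Ucard1: "1 \<le> real (Ucard Sr)"
  proof -
    have e: "{card (Sr s a) | s a. True} = (\<lambda>(s, a). card (Sr s a)) ` UNIV" by auto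
    have "card (Sr (st 0) (ac 0)) \<le> Ucard Sr" unfolding Ucard_def e by (rule Max_ge) auto
    moreover have "1 \<le> card (Sr (st 0) (ac 0))" using neS[of 0] by (simp add: S_def Suc_le_eq card_gt_0_iff)
    ultimately show ?thesis by simp
  qed
  have Lphi: "\<And>t s. norm (F t s) \<le> L\<phi>" by (simp add: F_def A1_phi)
  have Lphi0: "0 \<le> L\<phi>" using Lphi[of 0 "st 1"] norm_ge_zero order_trans by blast
  have lnmono: "2 * d * ln (1 + X / (lam * d)) \<le> 2 * d * B" if "0 \<le> X" "X \<le> real T * L\<phi>^2" for X
  proof -
    have "(real T * L\<phi>^2) * 1 \<le> (real T * L\<phi>^2) * real (Ucard Sr)"
      using Ucard1 by (intro mult_left_mono) auto
    then have "X \<le> real T * real (Ucard Sr) * L\<phi>^2"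
      using that by (simp add: mult_ac)
    then have "X / (lam * d) \<le> real T * real (Ucard Sr) * L\<phi>^2 / (lam * d)"
      using lam_pos dpos by (intro divide_right_mono) auto
    moreover have "0 \<le> X / (lam * d)" using that lam_pos dpos by simp
    ultimately have "ln (1 + X / (lam * d)) \<le> B"
      unfolding defs(5) defs(1)[symmetric] by (intro ln_mono) auto
    then show ?thesis using dpos by simp
  qed
  define xx where "xx t s = sqrt (P t s) *\<^sub>R (F t s - fb t)" for t s
  have nxx: "norm (xx t s) ^ 2 = P t s * norm (F t s - fb t) ^ 2" for t s
    using P0[of t s] by (simp add: xx_def power_mult_distrib)
  have trb: "(\<Sum>s\<in>S t. P t s * norm (F t s - fb t) ^ 2) \<le> L\<phi>^2" for t
    unfolding P_def fb_def by (rule mnlf.Hm_trace_bound[OF mS]) (rule Lphi)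
  have qxx: "xx t s \<bullet> (M *v xx t s) = P t s * ((F t s - fb t) \<bullet> (M *v (F t s - fb t)))" for t s M
    using P0[of t s] by (simp add: xx_def matrix_vector_mult_scaleR mult_ac)
  have E: "(\<Sum>t=1..T. \<Sum>s\<in>S t. xx t s \<bullet> (matrix_inv (Sg t) *v xx t s))
      \<le> 2 * real CARD('d) * ln (1 + (\<Sum>t=1..T. \<Sum>s\<in>S t. norm (xx t s) ^ 2) / (lam * real CARD('d)))"
  proof (rule elliptical[where A=Sg and J=S and x=xx])
    show "0 < lam" by (rule lam_pos)
    show "Sg 1 = lam *\<^sub>R mat 1" by (rule Sg1)
    show "finite (S t)" for t by simp
    show "Sg (Suc t) = Sg t + (\<Sum>s\<in>S t. outer (xx t s) (xx t s))" if "t \<in> {1..T}" for t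
      using SgSuc[of t] that mnlf.Hm_outer[OF mS, of t "F t" "th (Suc t)"]
      by (simp add: H_def xx_def P_def fb_def)
    show "(\<Sum>s\<in>S t. xx t s \<bullet> (matrix_inv (Sg t) *v xx t s)) \<le> 1" if "t \<in> {1..T}" for t
    proof -
      have "(\<Sum>s\<in>S t. xx t s \<bullet> (matrix_inv (Sg t) *v xx t s)) \<le> (\<Sum>s\<in>S t. norm (xx t s) ^ 2 / lam)"
        by (intro sum_mono Sgquad) (use that in auto)
      also have "\<dots> = (\<Sum>s\<in>S t. P t s * norm (F t s - fb t) ^ 2) / lam"
        by (simp add: nxx sum_divide_distrib)
      also have "\<dots> \<le> L\<phi>^2 / lam" using trb[of t] lam_pos by (intro divide_right_mono) auto
      also have "\<dots> \<le> 1" using lam lam_pos by simp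
      finally show ?thesis .
    qed
  qed
  have X0: "0 \<le> (\<Sum>t=1..T. \<Sum>s\<in>S t. norm (xx t s) ^ 2)" by (intro sum_nonneg) auto
  have XT: "(\<Sum>t=1..T. \<Sum>s\<in>S t. norm (xx t s) ^ 2) \<le> real T * L\<phi>^2"
  proof -
    have "(\<Sum>t=1..T. \<Sum>s\<in>S t. norm (xx t s) ^ 2) \<le> (\<Sum>t=1..T. L\<phi>^2)"
      by (intro sum_mono) (simp add: nxx trb)
    then show ?thesis by simp
  qed
  have C2: "(\<Sum>t=1..T. \<Sum>s'\<in>Sr (st t) (ac t). p t s' * wnorm2 (\<Sigma>inv t) (phihat t s')) \<le> 2 * d * B"
  proof -
    have "(\<Sum>t=1..T. \<Sum>s'\<in>Sr (st t) (ac t). p t s' * wnorm2 (\<Sigma>inv t) (phihat t s'))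
        = (\<Sum>t=1..T. \<Sum>s\<in>S t. xx t s \<bullet> (matrix_inv (Sg t) *v xx t s))"
      by (simp add: qxx pP phF defs(3) Sg_def S_def wnorm2_def)
    also have "\<dots> \<le> 2 * d * ln (1 + (\<Sum>t=1..T. \<Sum>s\<in>S t. norm (xx t s) ^ 2) / (lam * d))"
      using E by (simp add: defs(1))
    also have "\<dots> \<le> 2 * d * B" by (rule lnmono[OF X0 XT])
    finally show ?thesis .
  qed
  have quadb: "x \<bullet> (matrix_inv A *v x) \<le> norm x ^ 2 / lam"
    if "pd A" "\<forall>v. v \<bullet> ((lam *\<^sub>R mat 1) *v v) \<le> v \<bullet> (A *v v)" for A :: "real^'d^'d" and x
  proof -
    have "x \<bullet> (matrix_inv A *v x) \<le> 1 * (x \<bullet> (matrix_inv (lam *\<^sub>R mat 1 :: real^'d^'d) *v x))"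
      by (rule inv_compare[OF pd_props[OF lamI] pd_props(2)[OF that(1)]]) (use that in auto)
    then show ?thesis by (simp add: quad_scaled_inv[OF lam_pos])
  qed
  define Mx where "Mx t = Max ((\<lambda>s. wnorm2 (\<Sigma>inv t) (F t s)) ` S t)" for t
  have exm: "\<exists>s. s \<in> S t \<and> wnorm2 (\<Sigma>inv t) (F t s) = Mx t" for t
  proof -
    have "Mx t \<in> (\<lambda>s. wnorm2 (\<Sigma>inv t) (F t s)) ` S t"
      unfolding Mx_def by (rule Max_in) (use neS[of t] in auto)
    then show ?thesis by auto
  qed
  define m where "m t = (SOME s. s \<in> S t \<and> wnorm2 (\<Sigma>inv t) (F t s) = Mx t)" for t
  have m: "m t \<in> S t" "wnorm2 (\<Sigma>inv t) (F t (m t)) = Mx t" for t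
    using someI_ex[OF exm[of t]] unfolding m_def by auto
  define xk where "xk t = sqrt \<kappa> *\<^sub>R F t (m t)" for t
  define V where "V t = lam *\<^sub>R mat 1 + (\<Sum>i\<in>{1..<t}. outer (xk i) (xk i))" for t
  have V1: "V 1 = lam *\<^sub>R mat 1" by (simp add: V_def)
  have VSuc: "V (Suc t) = V t + outer (xk t) (xk t)" if "1 \<le> t" for t
    using that by (simp add: V_def atLeastLessThanSuc add.assoc add.commute)
  have Vpd: "pd (V t) \<and> (\<forall>v. v \<bullet> ((lam *\<^sub>R mat 1) *v v) \<le> v \<bullet> (V t *v v))" if "1 \<le> t" for t
    using that
  proof (induction t rule: nat_induct_at_least)
    case base then show ?case using lamI V1 by simp
  next
    case (Suc t)
    have "v \<bullet> ((lam *\<^sub>R mat 1) *v v) \<le> v \<bullet> (V (Suc t) *v v)" for v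
    proof -
      have "v \<bullet> ((lam *\<^sub>R mat 1) *v v) \<le> v \<bullet> (V t *v v)" using Suc.IH by blast
      then show ?thesis using VSuc[OF Suc.hyps]
        by (simp add: matrix_vector_mult_add_rdistrib inner_add_right outer_quad)
          (smt (verit) zero_le_power2)
    qed
    then show ?case using VSuc[OF Suc.hyps] pd_add_outer Suc.IH by auto
  qed
  have k0: "0 \<le> \<kappa>" using kappa by simp
  have xkq: "(xk t \<bullet> v)^2 = \<kappa> * (F t (m t) \<bullet> v)^2" for t v
    using k0 by (simp add: xk_def power_mult_distrib)
  have VleSg: "\<forall>v. v \<bullet> (V t *v v) \<le> v \<bullet> (Sg t *v v)" if "1 \<le> t" "t \<le> T" for t
    using that
  proof (induction t rule: nat_induct_at_least)
    case base then show ?case using V1 Sg1 by simp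
  next
    case (Suc t)
    have tT: "t \<in> {1..T}" using Suc by auto
    obtain s0 where s0: "s0 \<in> S t" "F t s0 = 0" using A3[of "st t" "ac t"] by (auto simp: S_def F_def)
    have kP: "\<kappa> \<le> P t (m t) * P t s0"
      using A2[OF tT _ _ thin[of t], of "m t" s0] m(1)[of t] s0(1) by (simp add: mP P_def S_def)
    show ?case
    proof
      fix v
      have "P t (m t) * P t s0 * (F t (m t) \<bullet> v)^2 \<le> v \<bullet> (H t *v v)"
        unfolding H_def P_def by (rule mnlf.Hm_lower[where f="F t", OF mS[of t] m(1)[of t] s0])
      moreover have "\<kappa> * (F t (m t) \<bullet> v)^2 \<le> P t (m t) * P t s0 * (F t (m t) \<bullet> v)^2"
        using kP by (intro mult_right_mono) auto
      moreover have "v \<bullet> (V t *v v) \<le> v \<bullet> (Sg t *v v)" using Suc by auto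
      ultimately show "v \<bullet> (V (Suc t) *v v) \<le> v \<bullet> (Sg (Suc t) *v v)"
        using VSuc[OF Suc.hyps] SgSuc[OF Suc.hyps]
        by (simp add: matrix_vector_mult_add_rdistrib inner_add_right outer_quad xkq)
    qed
  qed
  have nxk: "norm (xk t) ^ 2 \<le> L\<phi>^2" for t
  proof -
    have "norm (xk t) ^ 2 = \<kappa> * norm (F t (m t)) ^ 2" using k0 by (simp add: xk_def power_mult_distrib)
    also have "\<dots> \<le> 1 * norm (F t (m t)) ^ 2" using kappa by (intro mult_right_mono) auto
    also have "\<dots> \<le> L\<phi>^2" using Lphi[of t "m t"] by (simp add: power_mono)
    finally show ?thesis .
  qed
  have E1: "(\<Sum>t=1..T. \<Sum>j\<in>(UNIV::unit set). xk t \<bullet> (matrix_inv (V t) *v xk t))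
      \<le> 2 * real CARD('d) * ln (1 + (\<Sum>t=1..T. \<Sum>j\<in>(UNIV::unit set). norm (xk t) ^ 2) / (lam * real CARD('d)))"
  proof (rule elliptical[where A=V and J="\<lambda>t. UNIV" and x="\<lambda>t j. xk t"])
    show "0 < lam" by (rule lam_pos)
    show "V 1 = lam *\<^sub>R mat 1" by (rule V1)
    show "finite (UNIV::unit set)" by simp
    show "V (Suc t) = V t + (\<Sum>j\<in>(UNIV::unit set). outer (xk t) (xk t))" if "t \<in> {1..T}" for t
      using VSuc[of t] that by (simp add: UNIV_unit)
    show "(\<Sum>j\<in>(UNIV::unit set). xk t \<bullet> (matrix_inv (V t) *v xk t)) \<le> 1" if "t \<in> {1..T}" for t
    proof -
      have "xk t \<bullet> (matrix_inv (V t) *v xk t) \<le> norm (xk t) ^ 2 / lam"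
        using Vpd[of t] that by (intro quadb) auto
      also have "\<dots> \<le> L\<phi>^2 / lam" using nxk[of t] lam_pos by (intro divide_right_mono) auto
      also have "\<dots> \<le> 1" using lam lam_pos by simp
      finally show ?thesis by (simp add: UNIV_unit)
    qed
  qed
  have X10: "0 \<le> (\<Sum>t=1..T. norm (xk t) ^ 2)" by (intro sum_nonneg) auto
  have X1T: "(\<Sum>t=1..T. norm (xk t) ^ 2) \<le> real T * L\<phi>^2"
  proof -
    have "(\<Sum>t=1..T. norm (xk t) ^ 2) \<le> (\<Sum>t=1..T. L\<phi>^2)" by (intro sum_mono nxk)
    then show ?thesis by simp
  qed
  have Mx_le: "Mx t \<le> (1/\<kappa>) * (xk t \<bullet> (matrix_inv (V t) *v xk t))" if "t \<in> {1..T}" for t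
  proof -
    have Vp: "transpose (V t) = V t" "invertible (V t)" "\<forall>x. 0 \<le> x \<bullet> (V t *v x)"
      using pd_props[OF conjunct1[OF Vpd[of t]]] that by auto
    have "F t (m t) \<bullet> (matrix_inv (Sg t) *v F t (m t)) \<le> 1 * (F t (m t) \<bullet> (matrix_inv (V t) *v F t (m t)))"
      by (rule inv_compare[OF Vp pd_props(2)[OF conjunct1[OF Sgpd[of t]]]]) (use that VleSg[of t] in auto)
    moreover have "xk t \<bullet> (matrix_inv (V t) *v xk t) = \<kappa> * (F t (m t) \<bullet> (matrix_inv (V t) *v F t (m t)))"
      using k0 by (simp add: xk_def matrix_vector_mult_scaleR)
    ultimately show ?thesis using m(2)[of t] kappa by (simp add: defs(3) Sg_def wnorm2_def)
  qed
  have C1: "(\<Sum>t=1..T. Mx t) \<le> 2 * d / \<kappa> * B"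
  proof -
    have "(\<Sum>t=1..T. Mx t) \<le> (\<Sum>t=1..T. (1/\<kappa>) * (xk t \<bullet> (matrix_inv (V t) *v xk t)))"
      by (intro sum_mono Mx_le) auto
    also have "\<dots> = (1/\<kappa>) * (\<Sum>t=1..T. xk t \<bullet> (matrix_inv (V t) *v xk t))" by (simp add: sum_distrib_left)
    also have "\<dots> \<le> (1/\<kappa>) * (2 * d * ln (1 + (\<Sum>t=1..T. norm (xk t) ^ 2) / (lam * d)))"
      using E1 kappa by (intro mult_left_mono) (auto simp: UNIV_unit defs(1))
    also have "\<dots> \<le> (1/\<kappa>) * (2 * d * B)"
      using kappa by (intro mult_left_mono lnmono[OF X10 X1T]) auto
    also have "\<dots> = 2 * d / \<kappa> * B" by simp
    finally show ?thesis .
  qed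
  have Max3: "Max ((\<lambda>s'. wnorm2 (\<Sigma>inv t) (phihat t s')) ` Sr (st t) (ac t)) \<le> 4 * Mx t" if "t \<in> {1..T}" for t
  proof -
    define M where "M = matrix_inv (Sg t)"
    have Sp: "transpose (Sg t) = Sg t" "invertible (Sg t)" using pd_props[OF conjunct1[OF Sgpd[of t]]] that by auto
    have Msym: "transpose M = M" unfolding M_def by (rule minv_sym[OF Sp])
    have Mpsd: "\<forall>x. 0 \<le> x \<bullet> (M *v x)" unfolding M_def
      using psd_inv_quad[OF pd_props[OF conjunct1[OF Sgpd[of t]]]] that by auto
    have SM: "\<Sigma>inv t = M" by (simp add: defs(3) M_def Sg_def)
    have wF: "F t r \<bullet> (M *v F t r) \<le> Mx t" if "r \<in> S t" for r
      unfolding Mx_def using that by (intro Max_ge) (auto simp: SM wnorm2_def)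
    have wfb: "fb t \<bullet> (M *v fb t) \<le> Mx t"
    proof -
      have "fb t \<bullet> (M *v fb t) \<le> (\<Sum>r\<in>S t. P t r * (F t r \<bullet> (M *v F t r)))"
        unfolding fb_def P_def by (rule mnlf.jensen_quad[OF mS Msym Mpsd])
      also have "\<dots> \<le> (\<Sum>r\<in>S t. P t r * Mx t)" by (intro sum_mono mult_left_mono wF P0) auto
      also have "\<dots> = Mx t" by (simp add: sum_distrib_right[symmetric] Psum)
      finally show ?thesis .
    qed
    show ?thesis
    proof (rule Max.boundedI)
      show "finite ((\<lambda>s'. wnorm2 (\<Sigma>inv t) (phihat t s')) ` Sr (st t) (ac t))" by simp
      show "(\<lambda>s'. wnorm2 (\<Sigma>inv t) (phihat t s')) ` Sr (st t) (ac t) \<noteq> {}" using neS[of t] by (simp add: S_def)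
      fix a assume "a \<in> (\<lambda>s'. wnorm2 (\<Sigma>inv t) (phihat t s')) ` Sr (st t) (ac t)"
      then obtain r where r: "r \<in> S t" "a = wnorm2 (\<Sigma>inv t) (phihat t r)" by (auto simp: S_def)
      have "a = (F t r - fb t) \<bullet> (M *v (F t r - fb t))" by (simp add: r(2) SM phF wnorm2_def)
      also have "\<dots> \<le> 2 * (F t r \<bullet> (M *v F t r)) + 2 * (fb t \<bullet> (M *v fb t))" by (rule quad_diff_le[OF Mpsd])
      also have "\<dots> \<le> 4 * Mx t" using wF[OF r(1)] wfb by simp
      finally show "a \<le> 4 * Mx t" .
    qed
  qed
  have C3: "(\<Sum>t=1..T. Max ((\<lambda>s'. wnorm2 (\<Sigma>inv t) (phihat t s')) ` Sr (st t) (ac t))) \<le> 8 * d / \<kappa> * B"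
  proof -
    have "(\<Sum>t=1..T. Max ((\<lambda>s'. wnorm2 (\<Sigma>inv t) (phihat t s')) ` Sr (st t) (ac t))) \<le> (\<Sum>t=1..T. 4 * Mx t)"
      by (intro sum_mono Max3) auto
    also have "\<dots> = 4 * (\<Sum>t=1..T. Mx t)" by (simp add: sum_distrib_left)
    also have "\<dots> \<le> 4 * (2 * d / \<kappa> * B)" using C1 by simp
    finally show ?thesis by simp
  qed
  have C1': "(\<Sum>t=1..T. Max ((\<lambda>s'. wnorm2 (\<Sigma>inv t) (phi (st t) (ac t) s')) ` Sr (st t) (ac t))) \<le> 2 * d / \<kappa> * B"
    using C1 by (simp add: Mx_def S_def F_def)
  show ?thesis using C1' C2 C3 by blast
qed

end
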